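(* Let $q=2^{r}$ with $r$ a positive integer. Then for every positive integer $h$, \[ q^{h}MK^{h}=\sum_{i=0}^{h-1}(-1)^{h+i+1}\binom{h}{i}N^{h-i}q^{i}MK^{i} +q\sum_{i=0}^{\min\{N,h\}}(-1)^{h+i}C_{i}\sum_{t=i}^{h}t!\,S(h,t)\,2^{h-t}\binom{N-i}{N-t}, \] where $N=q(q^2-1)$ is the order of $SL(2,q)$, $S(h,t)=\frac{1}{t!}\sum_{j=0}^{t}(-1)^{t-j}\binom{t}{j}j^{h}$, and $\{C_i\}_{i=0}^{N}$ is the weight distribution of the code $C=C(SL(2,q))$, given for $0\le i\le N$ by \[ C_i=\sum\binom{q^2}{\nu_0}\prod_{tr(\beta^{-1})=0}\binom{q^2+q}{\nu_\beta}\prod_{tr(\beta^{-1})=1}\binom{q^2-q}{\nu_\beta}, \] where the sum runs over all families of nonnegative integers $\{\nu_\beta\}_{\beta\in\mathbb{F}_q}$ with $\sum_\beta\nu_\beta=i$ and $\sum_\beta\nu_\beta\beta=0$ in $\mathbb{F}_q$, and the first and second products run over $\beta\in\mathbb{F}_q^*$ with $tr(\beta^{-1})=0$, respectively $tr(\beta^{-1})=1$.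
   Context: $\mathbb{F}_q$ is the field with $q$ elements, $tr:\mathbb{F}_q\to\mathbb{F}_2$ the absolute trace $tr(x)=x+x^2+\cdots+x^{2^{r-1}}$, $\lambda(x)=(-1)^{tr(x)}$. The Kloosterman sum is $K(\lambda;a)=\sum_{\alpha\in\mathbb{F}_q^*}\lambda(\alpha+a\alpha^{-1})$ for $a\in\mathbb{F}_q^*$, and $MK^h=\sum_{a\in\mathbb{F}_q^*}K(\lambda;a)^h$ (so $MK^0=q-1$). Fix an ordering $g_1,\dots,g_N$ of $SL(2,q)$, let $v=(Tr(g_1),\dots,Tr(g_N))\in\mathbb{F}_q^N$ with $Tr$ the matrix trace, and let $C(SL(2,q))=\{u\in\mathbb{F}_2^N:u\cdot v=0\}$ (dot product in $\mathbb{F}_q$). $C_i$ is the number of codewords of Hamming weight $i$. Convention: $\binom{b}{a}=0$ if $b<a$. *)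

theory Defs
  imports "HOL-Analysis.Analysis" "HOL-Library.FuncSet"
begin

definition abs_tr :: "nat \<Rightarrow> 'a::field \<Rightarrow> 'a" where
  "abs_tr r x = (\<Sum>k<r. x ^ (2 ^ k))"

definition lam :: "nat \<Rightarrow> 'a::field \<Rightarrow> int" where
  "lam r x = (if abs_tr r x = 0 then 1 else -1)"

definition kloosterman :: "nat \<Rightarrow> 'a::{field,finite} \<Rightarrow> int" where
  "kloosterman r a = (\<Sum>\<alpha>\<in>UNIV - {0}. lam r (\<alpha> + a * inverse \<alpha>))"

definition MK :: "nat \<Rightarrow> 'a::{field,finite} itself \<Rightarrow> nat \<Rightarrow> int" where
  "MK r TYPE('a) h = (\<Sum>a\<in>(UNIV::'a set) - {0}. (kloosterman r a) ^ h)"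

definition SL2 :: "'a::{field,finite} itself \<Rightarrow> ('a^2^2) set" where
  "SL2 TYPE('a) = {A :: 'a^2^2. det A = 1}"

text \<open>The binary code C(SL(2,q)): words u in F_2^N (entries 0 or 1 of F_q), indexed by
  the elements of SL(2,q) rather than by an ordering g_1..g_N, with u . v = 0 computed in F_q.\<close>
definition code_SL2 :: "'a::{field,finite} itself \<Rightarrow> ('a^2^2 \<Rightarrow> 'a) set" where
  "code_SL2 TYPE('a) = {u \<in> SL2 TYPE('a) \<rightarrow>\<^sub>E {0, 1}. (\<Sum>g\<in>SL2 TYPE('a). u g * trace g) = 0}"

definition hweight :: "'a::{field,finite} itself \<Rightarrow> ('a^2^2 \<Rightarrow> 'a) \<Rightarrow> nat" where
  "hweight TYPE('a) u = card {g \<in> SL2 TYPE('a). u g \<noteq> 0}"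

definition Cw :: "'a::{field,finite} itself \<Rightarrow> nat \<Rightarrow> nat" where
  "Cw TYPE('a) i = card {u \<in> code_SL2 TYPE('a). hweight TYPE('a) u = i}"

definition stirling2 :: "nat \<Rightarrow> nat \<Rightarrow> real" where
  "stirling2 h t = (1 / fact t) * (\<Sum>j=0..t. (-1) ^ (t - j) * real (t choose j) * real j ^ h)"

definition ibinom :: "int \<Rightarrow> int \<Rightarrow> nat" where
  "ibinom b a = (if 0 \<le> a \<and> a \<le> b then nat b choose nat a else 0)"

end

theory Submission
  imports Defs "HOL-Computational_Algebra.Polynomial"
begin


lemma fermat_field:
  fixes x :: "'a::{field,finite}"
  assumes "x \<noteq> 0" shows "x ^ (CARD('a) - 1) = 1"
proof -
  let ?U = "UNIV - {0::'a}"
  have bij: "bij_betw (\<lambda>y. x * y) ?U ?U"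
    by (rule bij_betwI[where g="\<lambda>y. inverse x * y"]) (use assms in \<open>auto simp: field_simps\<close>)
  have "(\<Prod>y\<in>?U. x * y) = (\<Prod>y\<in>?U. y)"
    using prod.reindex_bij_betw[OF bij, of "\<lambda>y. y"] by simp
  moreover have "(\<Prod>y\<in>?U. x * y) = x ^ card ?U * (\<Prod>y\<in>?U. y)"
    by (simp add: prod.distrib)
  moreover have "(\<Prod>y\<in>?U. y) \<noteq> 0" by simp
  moreover have "card ?U = CARD('a) - 1" by (simp add: card_Diff_subset)
  ultimately show ?thesis by simp
qed

lemma frob_field:
  fixes x :: "'a::{field,finite}"
  shows "x ^ CARD('a) = x"
proof (cases "x = 0")
  case True then show ?thesis by simp
next
  case False
  have "CARD('a) = Suc (CARD('a) - 1)" using finite_UNIV_card_ge_0[where 'a='a] by simp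
  then have "x ^ CARD('a) = x * x ^ (CARD('a) - 1)" by (metis power_Suc)
  with fermat_field[OF False] show ?thesis by simp
qed

locale f2q =
  fixes r :: nat and TY :: "'a::{field,finite} itself"
  assumes r_pos: "r > 0" and cardq: "CARD('a) = 2 ^ r"
begin

lemma two_zero: "(2::'a) = 0"
proof -
  have "odd (CARD('a) - 1)" using cardq r_pos by simp
  then have "(-1::'a) ^ (CARD('a) - 1) = -1" by simp
  with fermat_field[of "-1::'a"] have "(-1::'a) = 1" by simp
  then show ?thesis by (metis add_eq_0_iff one_add_one)
qed

lemma add_self[simp]: "(x::'a) + x = 0"
  by (metis mult_2 two_zero mult_zero_left)

lemma neg_id[simp]: "- (x::'a) = x"
  by (metis add_self add_eq_0_iff)

lemma minus_plus: "(x::'a) - y = x + y"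
  by (metis neg_id diff_conv_add_uminus)

lemma sq_add: "((x::'a) + y)^2 = x^2 + y^2"
  by (simp add: power2_sum mult_2[symmetric] two_zero del: mult_2)

lemma pow2k_add: "((x::'a) + y)^(2^k) = x^(2^k) + y^(2^k)"
proof (induction k)
  case 0 then show ?case by simp
next
  case (Suc k)
  have "((x::'a) + y)^(2^Suc k) = (((x+y)^(2^k)))^2" by (simp add: power_mult[symmetric] mult.commute)
  also have "\<dots> = (x^(2^k))^2 + (y^(2^k))^2" using Suc by (simp add: sq_add)
  finally show ?case by (simp add: power_mult[symmetric] mult.commute)
qed

lemma frobq: "(x::'a) ^ (2^r) = x"
  using frob_field[of x] cardq by simp

lemma tr_add: "abs_tr r ((x::'a) + y) = abs_tr r x + abs_tr r y"
  by (simp add: abs_tr_def pow2k_add sum.distrib)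

lemma tr_zero[simp]: "abs_tr r (0::'a) = 0"
  by (simp add: abs_tr_def zero_power)

lemma tr_sq_eq: "abs_tr r ((x::'a)^2) = abs_tr r x"
proof -
  have "abs_tr r (x^2) = (\<Sum>k<r. x ^ (2 ^ Suc k))"
    by (simp add: abs_tr_def power_mult[symmetric] mult.commute)
  also have "\<dots> = abs_tr r x"
  proof -
    have "(\<Sum>k<Suc r. x ^ (2^k)) = x + (\<Sum>k<r. x ^ (2 ^ Suc k))"
      by (subst sum.lessThan_Suc_shift) simp
    moreover have "(\<Sum>k<Suc r. x ^ (2^k)) = abs_tr r x + x"
      by (simp add: abs_tr_def frobq)
    ultimately show ?thesis by (simp add: add.commute)
  qed
  finally show ?thesis .
qed

lemma tr_sq: "(abs_tr r (x::'a))^2 = abs_tr r x"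
proof -
  have "(abs_tr r x)^2 = (\<Sum>k<r. (x^2) ^ (2 ^ k))"
  proof -
    have "\<And>A::nat set. finite A \<Longrightarrow> (\<Sum>k\<in>A. x ^ (2 ^ k))^2 = (\<Sum>k\<in>A. (x^(2^k))^2)"
    proof -
      fix A :: "nat set" assume "finite A"
      then show "(\<Sum>k\<in>A. x ^ (2 ^ k))^2 = (\<Sum>k\<in>A. (x^(2^k))^2)"
        by (induction A rule: finite_induct) (auto simp: sq_add)
    qed
    then show ?thesis by (simp add: abs_tr_def power_mult[symmetric] mult.commute)
  qed
  also have "\<dots> = abs_tr r (x^2)" by (simp add: abs_tr_def)
  finally show ?thesis by (simp add: tr_sq_eq)
qed

lemma tr_01: "abs_tr r (x::'a) = 0 \<or> abs_tr r x = 1"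
proof -
  have "abs_tr r x * (abs_tr r x - 1) = 0" using tr_sq[of x]
    by (simp add: power2_eq_square algebra_simps)
  then show ?thesis by auto
qed

lemma lam_add: "lam r ((x::'a) + y) = lam r x * lam r y"
  using tr_01[of x] tr_01[of y] by (auto simp: lam_def tr_add)

lemma lam_zero[simp]: "lam r (0::'a) = 1"
  by (simp add: lam_def)

lemma lam_pm: "lam r (x::'a) = 1 \<or> lam r x = -1"
  by (simp add: lam_def)

lemma lam_sq: "lam r ((x::'a)^2) = lam r x"
  by (simp add: lam_def tr_sq_eq)

lemma tr_nontriv: "\<exists>x0::'a. abs_tr r x0 = 1"
proof (rule ccontr)
  assume "\<not> ?thesis"
  then have all0: "\<forall>x::'a. abs_tr r x = 0" using tr_01 by blast
  define p :: "'a poly" where "p = (\<Sum>k<r. monom 1 (2^k))"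
  have pe: "poly p x = abs_tr r x" for x
    by (simp add: p_def poly_sum poly_monom abs_tr_def)
  have "coeff p (2^(r-1)) = (\<Sum>k<r. (if k = r - 1 then 1 else 0))"
    unfolding p_def coeff_sum coeff_monom by (intro sum.cong) auto
  also have "\<dots> = 1" using r_pos by simp
  finally have "p \<noteq> 0" by auto
  then have "card {x. poly p x = 0} \<le> degree p" by (rule card_poly_roots_bound)
  also have "degree p \<le> 2^(r-1)"
    unfolding p_def
  proof (rule degree_sum_le)
    fix k assume "k \<in> {..<r}"
    then have "(2::nat)^k \<le> 2^(r-1)" by (intro power_increasing) auto
    then show "degree (monom (1::'a) (2^k)) \<le> 2^(r-1)"
      using degree_monom_le[of "1::'a" "2^k"] by linarith
  qed simp
  finally have "card (UNIV::'a set) \<le> 2^(r-1)" using pe all0 by simp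
  moreover have "(2::nat)^(r-1) < 2^r" using r_pos by (intro power_strict_increasing) auto
  ultimately show False using cardq r_pos by simp
qed

lemma char_sum_1: "(\<Sum>x\<in>UNIV. lam r (x::'a)) = 0"
proof -
  obtain x0 :: 'a where x0: "abs_tr r x0 = 1" using tr_nontriv by blast
  have lx0: "lam r x0 = -1" using x0 by (simp add: lam_def)
  have b: "bij_betw (\<lambda>x. x + x0) UNIV UNIV"
    by (rule bij_betwI[where g="\<lambda>x. x+x0"]) (auto simp: add.assoc)
  have "(\<Sum>x\<in>UNIV. lam r (x::'a)) = (\<Sum>x\<in>UNIV. lam r (x + x0))"
    using sum.reindex_bij_betw[OF b, of "lam r"] by simp
  also have "\<dots> = - (\<Sum>x\<in>UNIV. lam r (x::'a))"
    by (simp add: lam_add lx0 sum_negf)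
  finally show ?thesis by simp
qed

lemma char_sum: "(\<Sum>x\<in>UNIV. lam r (a * (x::'a))) = (if a = 0 then int CARD('a) else 0)"
proof (cases "a = 0")
  case True then show ?thesis by simp
next
  case False
  have b: "bij_betw (\<lambda>x. a * x) UNIV UNIV"
    by (rule bij_betwI[where g="\<lambda>x. inverse a * x"]) (use False in auto)
  have "(\<Sum>x\<in>UNIV. lam r (a * x)) = (\<Sum>x\<in>UNIV. lam r (x::'a))"
    using sum.reindex_bij_betw[OF b, of "lam r"] by simp
  then show ?thesis using False char_sum_1 by simp
qed

lemma card_ker: "2 * card {x::'a. abs_tr r x = 0} = CARD('a)"
proof -
  obtain x0 :: 'a where x0: "abs_tr r x0 = 1" using tr_nontriv by blast
  let ?K = "{x::'a. abs_tr r x = 0}" and ?L = "{x::'a. abs_tr r x = 1}"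
  have "bij_betw (\<lambda>x. x + x0) ?K ?L"
    by (rule bij_betwI[where g="\<lambda>x. x + x0"]) (auto simp: tr_add x0 add.assoc)
  then have "card ?K = card ?L" by (rule bij_betw_same_card)
  moreover have "?K \<union> ?L = UNIV" using tr_01 by blast
  moreover have "?K \<inter> ?L = {}" by auto
  ultimately have "card (UNIV::'a set) = card ?K + card ?K"
    by (metis card_Un_disjoint finite)
  then show ?thesis by simp
qed

end


context f2q begin

lemma eq_iff_add0: "((a::'a) = b) \<longleftrightarrow> a + b = 0"
proof
  assume h: "a + b = 0"
  have "a = (a + b) + b" by (simp add: add.assoc)
  then show "a = b" by (simp add: h)
qed simp

lemma phi_diff: "((y::'a)^2 + y = y0^2 + y0) \<longleftrightarrow> (y = y0 \<or> y = y0 + 1)"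
proof -
  have e: "(y + y0)^2 + (y + y0) = (y^2 + y) + (y0^2 + y0)"
    by (simp add: sq_add algebra_simps)
  have "(y^2 + y = y0^2 + y0) \<longleftrightarrow> (y + y0)^2 + (y + y0) = 0"
    by (simp only: e eq_iff_add0[of "y^2+y"])
  also have "\<dots> \<longleftrightarrow> (y + y0) * ((y + y0) + 1) = 0"
    by (simp add: power2_eq_square algebra_simps)
  also have "\<dots> \<longleftrightarrow> y + y0 = 0 \<or> y + y0 + 1 = 0" by simp
  also have "\<dots> \<longleftrightarrow> y = y0 \<or> y = y0 + 1"
    by (simp add: eq_iff_add0[of y] add.assoc add.commute add.left_commute)
  finally show ?thesis .
qed
lemma phi_tr: "abs_tr r ((y::'a)^2 + y) = 0"
  by (simp add: tr_add tr_sq_eq)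

lemma card_phi_fiber:
  assumes "(y0::'a)^2 + y0 = c"
  shows "card {y::'a. y^2 + y = c} = 2"
proof -
  have "{y::'a. y^2 + y = c} = {y0, y0 + 1}" by (auto simp: phi_diff[of _ y0, unfolded assms])
  moreover have "y0 \<noteq> y0 + 1" by simp
  ultimately show ?thesis by simp
qed

lemma card_phi:
  "card {y::'a. y^2 + y = c} = (if abs_tr r c = 0 then 2 else 0)"
proof (cases "\<exists>y0::'a. y0^2 + y0 = c")
  case True
  then obtain y0 where "(y0::'a)^2 + y0 = c" by blast
  then have "card {y::'a. y^2 + y = c} = 2" by (rule card_phi_fiber)
  moreover have "abs_tr r c = 0" using phi_tr[of y0] \<open>y0^2 + y0 = c\<close> by simp
  ultimately show ?thesis by simp
next
  case False
  let ?phi = "\<lambda>y::'a. y^2 + y"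
  let ?I = "range ?phi" and ?K = "{x::'a. abs_tr r x = 0}"
  have IK: "?I \<subseteq> ?K" using phi_tr by auto
  have "card (UNIV::'a set) = (\<Sum>c\<in>?I. card {x\<in>UNIV. ?phi x = c})"
    using sum.group[of "UNIV::'a set" ?I ?phi "\<lambda>_. (1::nat)"] by simp
  also have "\<dots> = (\<Sum>c\<in>?I. 2)"
  proof (intro sum.cong refl)
    fix c assume "c \<in> ?I"
    then obtain y0 where "?phi y0 = c" by blast
    then show "card {x\<in>UNIV. ?phi x = c} = 2" using card_phi_fiber[of y0 c] by simp
  qed
  finally have "CARD('a) = 2 * card ?I" by simp
  with card_ker have "card ?I = card ?K" by simp
  then have "?I = ?K" using IK by (intro card_subset_eq) auto
  have "abs_tr r c \<noteq> 0"
  proof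
    assume "abs_tr r c = 0"
    then have "c \<in> ?I" using \<open>?I = ?K\<close> by simp
    then show False using False by auto
  qed
  with False show ?thesis by simp
qed

end

context f2q begin

definition R :: "'a \<Rightarrow> nat" where
  "R \<beta> = card {x::'a. x \<noteq> 0 \<and> x + inverse x = \<beta>}"
lemma R_zero: "R 0 = 1"
proof -
  have "{x::'a. x \<noteq> 0 \<and> x + inverse x = 0} = {1}"
  proof (intro set_eqI iffI)
    fix x :: 'a assume x: "x \<in> {x. x \<noteq> 0 \<and> x + inverse x = 0}"
    then have x0: "x \<noteq> 0" and "x + inverse x = 0" by auto
    then have "x = inverse x" using eq_iff_add0[of x "inverse x"] by blast
    then have "x * x = 1" using x0 by (metis right_inverse)
    moreover have "(x + 1) * (x + 1) = x * x + (x + x) + 1" by (simp add: distrib_left distrib_right add.assoc two_zero)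
    ultimately have "(x + 1) * (x + 1) = 0" by simp
    then have "x + 1 = 0" by simp
    then show "x \<in> {1}" using eq_iff_add0[of x 1] by blast
  next
    fix x :: 'a assume "x \<in> {1}"
    then show "x \<in> {x. x \<noteq> 0 \<and> x + inverse x = 0}" by simp
  qed
  then show ?thesis by (simp add: R_def)
qed
lemma R_nz:
  assumes b: "(\<beta>::'a) \<noteq> 0"
  shows "R \<beta> = (if abs_tr r (inverse \<beta>) = 0 then 2 else 0)"
proof -
  let ?c = "(inverse \<beta>)^2"
  have "{x::'a. x \<noteq> 0 \<and> x + inverse x = \<beta>} = (\<lambda>y. \<beta> * y) ` {y. y^2 + y = ?c}"
  proof (intro set_eqI iffI)
    fix x :: 'a assume x: "x \<in> {x. x \<noteq> 0 \<and> x + inverse x = \<beta>}"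
    then have x0: "x \<noteq> 0" and e: "x + inverse x = \<beta>" by auto
    let ?y = "x / \<beta>"
    have "?y^2 + ?y = ?c"
    proof -
      have "x * x + 1 = \<beta> * x" using e x0 by (auto simp: field_simps)
      then have "x*x + 1 + \<beta>*x = 0" using eq_iff_add0[of "x*x+1" "\<beta>*x"] by blast
      then have "x*x + \<beta>*x + 1 = 0" by (simp add: ac_simps)
      then have "?y^2 + ?y + ?c = 0" using b by (simp add: field_simps power2_eq_square)
      then show ?thesis using eq_iff_add0[of "?y^2 + ?y" ?c] by simp
    qed
    moreover have "x = \<beta> * ?y" using b by simp
    ultimately show "x \<in> (\<lambda>y. \<beta> * y) ` {y. y^2 + y = ?c}" by blast
  next
    fix x :: 'a assume "x \<in> (\<lambda>y. \<beta> * y) ` {y. y^2 + y = ?c}"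
    then obtain y where y: "y^2 + y = ?c" and xy: "x = \<beta> * y" by blast
    have y0: "y \<noteq> 0" using y b by auto
    have "y^2 + y + ?c = 0" using y eq_iff_add0[of "y^2+y" ?c] by simp
    then have "\<beta>^2 * y^2 + \<beta>^2 * y + 1 = 0" using b by (simp add: field_simps power2_eq_square)
    then have "x * x + \<beta> * x + 1 = 0" by (simp add: xy power2_eq_square algebra_simps)
    then have "x * x + 1 + \<beta> * x = 0" by (simp add: ac_simps)
    then have "x * x + 1 = \<beta> * x" using eq_iff_add0[of "x*x+1" "\<beta>*x"] by blast
    then have "x + inverse x = \<beta>" using xy y0 b by (simp add: field_simps)
    then show "x \<in> {x. x \<noteq> 0 \<and> x + inverse x = \<beta>}" using xy y0 b by simp
  qed
  moreover have "inj_on (\<lambda>y. \<beta> * y) {y. y^2 + y = ?c}" using b by (auto intro: inj_onI)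
  ultimately have "R \<beta> = card {y::'a. y^2 + y = ?c}" by (simp add: R_def card_image)
  also have "\<dots> = (if abs_tr r (inverse \<beta>) = 0 then 2 else 0)"
    by (simp add: card_phi tr_sq_eq)
  finally show ?thesis .
qed

lemma R_sum:
  fixes f :: "'a \<Rightarrow> 'b::comm_semiring_1"
  shows "(\<Sum>\<beta>\<in>UNIV. of_nat (R \<beta>) * f \<beta>) = (\<Sum>x\<in>UNIV - {0}. f (x + inverse x))"
proof -
  have "(\<Sum>x\<in>UNIV - {0}. f (x + inverse x))
        = (\<Sum>\<beta>\<in>UNIV. \<Sum>x\<in>{x\<in>UNIV - {0}. x + inverse x = \<beta>}. f (x + inverse x))"
    by (rule sum.group[symmetric]) auto
  also have "\<dots> = (\<Sum>\<beta>\<in>UNIV. of_nat (R \<beta>) * f \<beta>)"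
  proof (intro sum.cong refl)
    fix \<beta> :: 'a
    have "(\<Sum>x\<in>{x\<in>UNIV - {0}. x + inverse x = \<beta>}. f (x + inverse x))
         = (\<Sum>x\<in>{x\<in>UNIV - {0}. x + inverse x = \<beta>}. f \<beta>)" by (intro sum.cong) auto
    also have "\<dots> = of_nat (R \<beta>) * f \<beta>"
      by (simp add: R_def conj_commute)
    finally show "(\<Sum>x\<in>{x\<in>UNIV - {0}. x + inverse x = \<beta>}. f (x + inverse x)) = of_nat (R \<beta>) * f \<beta>" .
  qed
  finally show ?thesis by simp
qed

lemma R_total: "(\<Sum>\<beta>\<in>UNIV. R \<beta>) = CARD('a) - 1"
  using R_sum[of "\<lambda>_. 1::nat"] by (simp add: card_Diff_subset)

end

lemma card_mat2:
  "card {A :: ('a::zero)^2^2. P (A$1$1) (A$1$2) (A$2$1) (A$2$2)}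
   = card {(a,b,c,d). P a b c d}"
proof -
  let ?f = "\<lambda>A :: 'a^2^2. (A$1$1, A$1$2, A$2$1, A$2$2)"
  let ?S = "{A :: 'a^2^2. P (A$1$1) (A$1$2) (A$2$1) (A$2$2)}"
  have inj: "inj ?f"
  proof (rule injI)
    fix A B :: "'a^2^2" assume "?f A = ?f B"
    then have "A$1$1 = B$1$1" "A$1$2 = B$1$2" "A$2$1 = B$2$1" "A$2$2 = B$2$2" by auto
    then show "A = B" by (simp add: vec_eq_iff forall_2)
  qed
  have eq: "?f ` {A. P (A$1$1) (A$1$2) (A$2$1) (A$2$2)} = {(a,b,c,d). P a b c d}"
  proof (intro set_eqI iffI)
    fix x assume "x \<in> {(a,b,c,d). P a b c d}"
    then obtain a b c d where x: "x = (a,b,c,d)" and p: "P a b c d" by auto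
    let ?A = "vector [vector [a,b], vector [c,d]] :: 'a^2^2"
    have "?f ?A = x" by (simp add: x)
    moreover have "?A \<in> {A. P (A$1$1) (A$1$2) (A$2$1) (A$2$2)}" using p by simp
    ultimately show "x \<in> ?f ` {A. P (A$1$1) (A$1$2) (A$2$1) (A$2$2)}" by blast
  next
    fix x assume "x \<in> ?f ` {A. P (A$1$1) (A$1$2) (A$2$1) (A$2$2)}"
    then show "x \<in> {(a,b,c,d). P a b c d}" by auto
  qed
  moreover have "card (?f ` ?S) = card ?S"
    by (rule card_image[OF inj_on_subset[OF inj subset_UNIV]])
  ultimately show ?thesis by simp
qed


context f2q begin

lemma card_prod_eq:
  "card {(b::'a,c::'a). b * c = m} = (if m = 0 then 2 * CARD('a) - 1 else CARD('a) - 1)"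
proof (cases "m = 0")
  case True
  have "{(b::'a,c::'a). b * c = m} = ({0} \<times> UNIV) \<union> (UNIV \<times> {0})" using True by auto
  moreover have "card (({0::'a} \<times> (UNIV::'a set)) \<union> ((UNIV::'a set) \<times> {0::'a})) = 2 * CARD('a) - 1"
  proof -
    have u: "({0::'a} \<times> (UNIV::'a set)) \<union> ((UNIV::'a set) \<times> {0::'a})
        = ({0::'a} \<times> (UNIV::'a set)) \<union> ((UNIV - {0::'a}) \<times> {0::'a})" by auto
    have "card (({0::'a} \<times> (UNIV::'a set)) \<union> ((UNIV - {0::'a}) \<times> {0::'a}))
       = card ({0::'a} \<times> (UNIV::'a set)) + card ((UNIV - {0::'a}) \<times> {0::'a})"
      by (rule card_Un_disjoint) auto
    also have "\<dots> = CARD('a) + (CARD('a) - 1)"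
      by (simp add: card_cartesian_product card_Diff_subset)
    finally show ?thesis using u finite_UNIV_card_ge_0[where 'a='a] by simp
  qed
  ultimately show ?thesis using True by simp
next
  case False
  have "{(b::'a,c::'a). b * c = m} = (\<lambda>b. (b, m / b)) ` (UNIV - {0})"
  proof (intro set_eqI iffI)
    fix x assume "x \<in> {(b::'a,c::'a). b * c = m}"
    then obtain b c where x: "x = (b,c)" and e: "b * c = m" by auto
    then have "b \<noteq> 0" using False by auto
    then show "x \<in> (\<lambda>b. (b, m / b)) ` (UNIV - {0})" using x e by (auto simp: field_simps)
  qed (use False in \<open>auto split: if_splits\<close>)
  moreover have "inj_on (\<lambda>b. (b, m / b)) (UNIV - {0::'a})" by (auto intro: inj_onI)
  ultimately show ?thesis using False by (simp add: card_image card_Diff_subset)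
qed

definition nb :: "'a \<Rightarrow> nat" where
  "nb \<beta> = card {g \<in> SL2 TYPE('a). trace g = \<beta>}"

lemma nb_formula: "nb \<beta> = CARD('a) * (CARD('a) - 1) + CARD('a) * R \<beta>"
proof -
  let ?q = "CARD('a)"
  have "nb \<beta> = card {A :: 'a^2^2. (A$1$1 * A$2$2 - A$1$2 * A$2$1 = 1) \<and> A$1$1 + A$2$2 = \<beta>}"
    by (simp add: nb_def SL2_def det_2 trace_def sum_2)
  also have "\<dots> = card {(a::'a,b::'a,c::'a,d::'a). a * d - b * c = 1 \<and> a + d = \<beta>}"
    by (rule card_mat2)
  also have "\<dots> = card {(a::'a,b::'a,c::'a). b * c = 1 + a * (a + \<beta>)}"
  proof -
    let ?g = "\<lambda>(a::'a,b::'a,c::'a). (a,b,c,a+\<beta>)"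
    have "{(a::'a,b::'a,c::'a,d::'a). a * d - b * c = 1 \<and> a + d = \<beta>}
        = ?g ` {(a::'a,b::'a,c::'a). b * c = 1 + a * (a + \<beta>)}"
    proof (intro set_eqI iffI)
      fix x assume "x \<in> {(a::'a,b::'a,c::'a,d::'a). a * d - b * c = 1 \<and> a + d = \<beta>}"
      then obtain a b c d where x: "x = (a,b,c,d)" and e1: "a * d + b * c = 1" and e2: "a + d = \<beta>"
        by (auto simp: minus_plus)
      have d: "d = a + \<beta>" using e2 eq_iff_add0[of d "a+\<beta>"] by (simp add: ac_simps)
      have "b * c + (1 + a * (a + \<beta>)) = 0" using e1 d by (simp add: ac_simps)
      then have "b * c = 1 + a * (a + \<beta>)" using eq_iff_add0[of "b*c"] by blast
      then show "x \<in> ?g ` {(a::'a,b::'a,c::'a). b * c = 1 + a * (a + \<beta>)}"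
        using x d by (auto intro!: image_eqI[where x="(a,b,c)"])
    next
      fix x assume "x \<in> ?g ` {(a::'a,b::'a,c::'a). b * c = 1 + a * (a + \<beta>)}"
      then obtain a b c where x: "x = (a,b,c,a+\<beta>)" and e: "b * c = 1 + a * (a + \<beta>)" by auto
      have "a * (a + \<beta>) + b * c = 1" using e by (simp add: ac_simps add.assoc[symmetric])
      moreover have "a + (a + \<beta>) = \<beta>" by (simp add: add.assoc[symmetric])
      ultimately show "x \<in> {(a::'a,b::'a,c::'a,d::'a). a * d - b * c = 1 \<and> a + d = \<beta>}"
        using x by (simp add: minus_plus)
    qed
    moreover have "inj ?g" by (auto intro: injI)
    ultimately show ?thesis by (simp add: card_image inj_on_subset)
  qed
  also have "\<dots> = card (SIGMA a:UNIV. {(b::'a,c::'a). b * c = 1 + a * (a + \<beta>)})"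
    by (intro arg_cong[where f=card]) auto
  also have "\<dots> = (\<Sum>a\<in>UNIV. card {(b::'a,c::'a). b * c = 1 + a * (a + \<beta>)})"
    by (rule card_SigmaI) auto
  also have "\<dots> = (\<Sum>a\<in>UNIV. (?q - 1) + (if 1 + a * (a + \<beta>) = 0 then ?q else 0))"
    by (intro sum.cong refl) (use finite_UNIV_card_ge_0[where 'a='a] in \<open>simp add: card_prod_eq mult_2\<close>)
  also have "\<dots> = ?q * (?q - 1) + ?q * card {a::'a. 1 + a * (a + \<beta>) = 0}"
  proof -
    have "(\<Sum>a\<in>UNIV. (?q - 1) + (if 1 + a * (a + \<beta>) = 0 then ?q else 0))
       = (\<Sum>a\<in>(UNIV::'a set). ?q - 1) + (\<Sum>a\<in>UNIV. (if 1 + a * (a + \<beta>) = 0 then ?q else 0))"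
      by (rule sum.distrib)
    moreover have "(\<Sum>a\<in>UNIV. (if 1 + a * (a + \<beta>) = 0 then ?q else 0)) = ?q * card {a::'a. 1 + a * (a + \<beta>) = 0}"
      by (simp add: sum.If_cases)
    ultimately show ?thesis by simp
  qed
  also have "{a::'a. 1 + a * (a + \<beta>) = 0} = {x. x \<noteq> 0 \<and> x + inverse x = \<beta>}"
  proof (intro set_eqI iffI)
    fix x :: 'a assume "x \<in> {a. 1 + a * (a + \<beta>) = 0}"
    then have e: "1 + x * (x + \<beta>) = 0" by simp
    then have x0: "x \<noteq> 0" by auto
    have "x * (x + \<beta>) = 1" using e eq_iff_add0[of "x * (x + \<beta>)" 1] by (simp add: add.commute)
    then have "x + \<beta> = inverse x" using x0 by (simp add: field_simps)
    then have "x + inverse x = x + (x + \<beta>)" by simp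
    then have "x + inverse x = \<beta>" by (simp add: add.assoc[symmetric])
    then show "x \<in> {x. x \<noteq> 0 \<and> x + inverse x = \<beta>}" using x0 by simp
  next
    fix x :: 'a assume "x \<in> {x. x \<noteq> 0 \<and> x + inverse x = \<beta>}"
    then have x0: "x \<noteq> 0" and e: "x + inverse x = \<beta>" by auto
    have "x + \<beta> = x + (x + inverse x)" using e by simp
    then have "x + \<beta> = inverse x" by (simp add: add.assoc[symmetric])
    then have "x * (x + \<beta>) = 1" using x0 by simp
    then show "x \<in> {a. 1 + a * (a + \<beta>) = 0}" by simp
  qed
  finally show ?thesis by (simp add: R_def)
qed

end


context f2q begin

abbreviation "G \<equiv> SL2 TYPE('a)"

lemma finite_G: "finite G" by simp

lemma sum_G_trace:
  fixes f :: "'a \<Rightarrow> 'b::comm_semiring_1"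
  shows "(\<Sum>g\<in>G. f (trace g)) = (\<Sum>\<beta>\<in>UNIV. of_nat (nb \<beta>) * f \<beta>)"
proof -
  have "(\<Sum>g\<in>G. f (trace g)) = (\<Sum>\<beta>\<in>UNIV. \<Sum>g\<in>{g\<in>G. trace g = \<beta>}. f (trace g))"
    by (rule sum.group[symmetric]) auto
  also have "\<dots> = (\<Sum>\<beta>\<in>UNIV. of_nat (nb \<beta>) * f \<beta>)"
  proof (intro sum.cong refl)
    fix \<beta> :: 'a
    have "(\<Sum>g\<in>{g\<in>G. trace g = \<beta>}. f (trace g)) = (\<Sum>g\<in>{g\<in>G. trace g = \<beta>}. f \<beta>)"
      by (intro sum.cong) auto
    then show "(\<Sum>g\<in>{g\<in>G. trace g = \<beta>}. f (trace g)) = of_nat (nb \<beta>) * f \<beta>"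
      by (simp add: nb_def)
  qed
  finally show ?thesis .
qed

lemma card_G: "card G = CARD('a) * (CARD('a)^2 - 1)"
proof -
  let ?q = "CARD('a)"
  have "card G = (\<Sum>g\<in>G. (1::nat))" by simp
  also have "\<dots> = (\<Sum>\<beta>\<in>UNIV. nb \<beta>)" using sum_G_trace[of "\<lambda>_. 1::nat"] by simp
  also have "\<dots> = (\<Sum>\<beta>\<in>(UNIV::'a set). ?q * (?q - 1)) + ?q * (\<Sum>\<beta>\<in>UNIV. R \<beta>)"
    by (simp add: nb_formula sum.distrib sum_distrib_left)
  also have "\<dots> = ?q * (?q * (?q - 1)) + ?q * (?q - 1)" by (simp add: R_total)
  also have "\<dots> = ?q * (?q^2 - 1)"
  proof -
    obtain p where "?q = Suc p" by (cases "CARD('a)") auto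
    then show ?thesis by (simp add: power2_eq_square algebra_simps)
  qed
  finally show ?thesis .
qed

lemma nb_0: "nb 0 = CARD('a)^2"
proof -
  have "CARD('a) * (CARD('a) - 1) + CARD('a) = CARD('a) * CARD('a)"
  proof -
    obtain p where "CARD('a) = Suc p" by (cases "CARD('a)") auto
    then show ?thesis by simp
  qed
  then show ?thesis by (simp add: nb_formula R_zero power2_eq_square)
qed

lemma nb_tr0: "\<beta> \<noteq> 0 \<Longrightarrow> abs_tr r (inverse \<beta>) = 0 \<Longrightarrow> nb \<beta> = CARD('a)^2 + CARD('a)"
proof -
  assume "\<beta> \<noteq> 0" "abs_tr r (inverse \<beta>) = 0"
  then have "R \<beta> = 2" by (simp add: R_nz)
  moreover have "CARD('a) * (CARD('a) - 1) + CARD('a) * 2 = CARD('a)^2 + CARD('a)"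
  proof -
    obtain p where "CARD('a) = Suc p" by (cases "CARD('a)") auto
    then show ?thesis by (simp add: power2_eq_square algebra_simps)
  qed
  ultimately show ?thesis by (simp add: nb_formula)
qed

lemma nb_tr1: "\<beta> \<noteq> 0 \<Longrightarrow> abs_tr r (inverse \<beta>) = 1 \<Longrightarrow> nb \<beta> = CARD('a)^2 - CARD('a)"
proof -
  assume "\<beta> \<noteq> 0" "abs_tr r (inverse \<beta>) = 1"
  then have "R \<beta> = 0" by (simp add: R_nz)
  moreover have "CARD('a) * (CARD('a) - 1) = CARD('a)^2 - CARD('a)"
    by (simp add: power2_eq_square diff_mult_distrib2)
  ultimately show ?thesis by (simp add: nb_formula)
qed

lemma nb_int: "int (nb \<beta>) = int CARD('a) * (int CARD('a) - 1) + int CARD('a) * int (R \<beta>)"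
proof -
  have "CARD('a) \<ge> 1" using card_gt_0_iff[of "UNIV::'a set"] by simp
  then show ?thesis by (simp add: nb_formula of_nat_diff)
qed

lemma kl_G:
  assumes a: "(a::'a) \<noteq> 0"
  shows "(\<Sum>g\<in>G. lam r (a * trace g)) = int CARD('a) * kloosterman r (a^2)"
proof -
  let ?q = "CARD('a)"
  have "(\<Sum>g\<in>G. lam r (a * trace g)) = (\<Sum>\<beta>\<in>UNIV. int (nb \<beta>) * lam r (a * \<beta>))"
    using sum_G_trace[of "\<lambda>\<beta>. lam r (a * \<beta>)"] by simp
  also have "\<dots> = (\<Sum>\<beta>\<in>UNIV. int ?q * (int ?q - 1) * lam r (a * \<beta>)
                 + int ?q * (int (R \<beta>) * lam r (a * \<beta>)))"
    by (intro sum.cong refl) (simp add: nb_int algebra_simps)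
  also have "\<dots> = int ?q * (int ?q - 1) * (\<Sum>\<beta>\<in>UNIV. lam r (a * \<beta>))
                 + int ?q * (\<Sum>\<beta>\<in>UNIV. int (R \<beta>) * lam r (a * \<beta>))"
    by (simp add: sum.distrib sum_distrib_left)
  also have "(\<Sum>\<beta>\<in>UNIV. lam r (a * \<beta>)) = 0" using char_sum[of a] a by simp
  also have "(\<Sum>\<beta>\<in>UNIV. int (R \<beta>) * lam r (a * \<beta>)) = (\<Sum>x\<in>UNIV - {0}. lam r (a * (x + inverse x)))"
    using R_sum[of "\<lambda>\<beta>. lam r (a * \<beta>)"] by simp
  also have "\<dots> = kloosterman r (a^2)"
  proof -
    have b: "bij_betw (\<lambda>x. a * x) (UNIV - {0}) (UNIV - {0})"
      by (rule bij_betwI[where g="\<lambda>x. inverse a * x"]) (use a in auto)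
    have "kloosterman r (a^2) = (\<Sum>x\<in>UNIV - {0}. lam r (a * x + a^2 * inverse (a * x)))"
      unfolding kloosterman_def using sum.reindex_bij_betw[OF b, of "\<lambda>\<alpha>. lam r (\<alpha> + a^2 * inverse \<alpha>)"] by simp
    also have "\<dots> = (\<Sum>x\<in>UNIV - {0}. lam r (a * (x + inverse x)))"
    proof (intro sum.cong refl)
      fix x :: 'a
      have "a^2 * inverse (a*x) = a * inverse x"
        using a by (simp add: power2_eq_square inverse_mult_distrib)
      then show "lam r (a * x + a^2 * inverse (a * x)) = lam r (a * (x + inverse x))"
        by (simp only: distrib_left)
    qed
    finally show ?thesis by simp
  qed
  finally show ?thesis by simp
qed

end


context f2q begin

definition D :: "nat \<Rightarrow> nat" where
  "D i = card {U. U \<subseteq> G \<and> card U = i \<and> (\<Sum>g\<in>U. trace g) = 0}"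

lemma Cw_D: "Cw TYPE('a) i = D i"
proof -
  let ?C = "{u \<in> code_SL2 TYPE('a). hweight TYPE('a) u = i}"
  let ?T = "{U. U \<subseteq> G \<and> card U = i \<and> (\<Sum>g\<in>U. trace g) = 0}"
  let ?f = "\<lambda>u::'a^2^2 \<Rightarrow> 'a. {g\<in>G. u g \<noteq> 0}"
  let ?h = "\<lambda>V. (\<lambda>g::'a^2^2. if g \<in> G then (of_bool (g \<in> V) :: 'a) else undefined)"
  have sumu: "(\<Sum>g\<in>G. u g * trace g) = (\<Sum>g\<in>?f u. trace g)" if "u \<in> G \<rightarrow>\<^sub>E {0,1}" for u
  proof -
    have "(\<Sum>g\<in>G. u g * trace g) = (\<Sum>g\<in>G. if u g \<noteq> 0 then trace g else 0)"
    proof (intro sum.cong refl)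
      fix g assume "g \<in> G"
      then have "u g = 0 \<or> u g = 1" using that by auto
      then show "u g * trace g = (if u g \<noteq> 0 then trace g else 0)" by auto
    qed
    also have "\<dots> = (\<Sum>g\<in>?f u. trace g)" by (simp add: sum.inter_filter)
    finally show ?thesis .
  qed
  have fh: "?f (?h V) = V" if "V \<subseteq> G" for V
  proof (intro set_eqI iffI)
    fix x assume "x \<in> ?f (?h V)"
    then show "x \<in> V" by (cases "x \<in> G") auto
  next
    fix x assume "x \<in> V"
    then show "x \<in> ?f (?h V)" using that by auto
  qed
  have "bij_betw ?f ?C ?T"
  proof (rule bij_betwI[where g="?h"])
    show "?f \<in> ?C \<rightarrow> ?T"
    proof
      fix u assume u: "u \<in> ?C"
      then have pu: "u \<in> G \<rightarrow>\<^sub>E {0,1}" and s: "(\<Sum>g\<in>G. u g * trace g) = 0"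
        and w: "hweight TYPE('a) u = i" by (auto simp: code_SL2_def)
      show "?f u \<in> ?T" using sumu[OF pu] s w by (auto simp: hweight_def)
    qed
    show "?h \<in> ?T \<rightarrow> ?C"
    proof
      fix V assume V: "V \<in> ?T"
      have pe: "?h V \<in> G \<rightarrow>\<^sub>E {0,1}" by auto
      have fV: "?f (?h V) = V" using V fh by auto
      show "?h V \<in> ?C"
        using pe sumu[OF pe] fV V by (auto simp: code_SL2_def hweight_def)
    qed
    show "?h (?f u) = u" if "u \<in> ?C" for u
    proof
      fix g
      have pu: "u \<in> G \<rightarrow>\<^sub>E {0,1}" using that by (auto simp: code_SL2_def)
      show "?h (?f u) g = u g"
      proof (cases "g \<in> G")
        case True
        then have "u g = 0 \<or> u g = 1" using pu by auto
        then show ?thesis using True by auto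
      next
        case False
        then show ?thesis using pu by (auto simp: PiE_def extensional_def)
      qed
    qed
    show "?f (?h V) = V" if "V \<in> ?T" for V using that fh by auto
  qed
  then show ?thesis unfolding Cw_def D_def by (rule bij_betw_same_card)
qed

end


definition Af :: "nat \<Rightarrow> nat \<Rightarrow> int" where
  "Af h t = (\<Sum>j\<le>t. (-1) ^ (t - j) * int (t choose j) * int j ^ h)"

lemma Af_0: "Af 0 t = (if t = 0 then 1 else 0)"
proof -
  have "Af 0 t = (\<Sum>j\<le>t. int (t choose j) * 1 ^ j * (-1) ^ (t - j))"
    by (simp add: Af_def mult.commute)
  also have "\<dots> = (1 + (-1)) ^ t" by (rule binomial_ring[symmetric])
  finally show ?thesis by simp
qed

lemma Af_Suc_0: "Af (Suc h) 0 = 0"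
  by (simp add: Af_def)

lemma sign_cancel:
  assumes "k \<le> t"
  shows "(-1::int) ^ (t - k) * int (t choose Suc k) + (-1) ^ (t - Suc k) * int (t choose Suc k) = 0"
proof (cases "k = t")
  case True then show ?thesis by simp
next
  case False
  then have "t - k = Suc (t - Suc k)" using assms by simp
  then show ?thesis by simp
qed

lemma Af_rec: "Af (Suc h) (Suc t) = int (Suc t) * (Af h (Suc t) + Af h t)"
proof -
  let ?c = "\<lambda>k. int (Suc k) ^ h"
  have A1: "Af h (Suc t) = (-1) ^ (Suc t) * 0 ^ h
     + (\<Sum>k\<le>t. (-1) ^ (t - k) * int (Suc t choose Suc k) * ?c k)"
    unfolding Af_def by (subst sum.atMost_Suc_shift) simp
  have "Af h t = (\<Sum>j\<le>Suc t. (-1) ^ (t - j) * int (t choose j) * int j ^ h)"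
    unfolding Af_def by (simp add: sum.atMost_Suc)
  also have "\<dots> = (-1) ^ t * 0 ^ h + (\<Sum>k\<le>t. (-1) ^ (t - Suc k) * int (t choose Suc k) * ?c k)"
    by (subst sum.atMost_Suc_shift) simp
  finally have A2: "Af h t = (-1) ^ t * 0 ^ h + (\<Sum>k\<le>t. (-1) ^ (t - Suc k) * int (t choose Suc k) * ?c k)" .
  have "Af h (Suc t) + Af h t = (\<Sum>k\<le>t. ((-1) ^ (t - k) * int (Suc t choose Suc k)
                  + (-1) ^ (t - Suc k) * int (t choose Suc k)) * ?c k)"
    unfolding A1 A2 by (simp add: sum.distrib algebra_simps)
  also have "\<dots> = (\<Sum>k\<le>t. (-1) ^ (t - k) * int (t choose k) * ?c k)"
  proof (intro sum.cong refl)
    fix k assume "k \<in> {..t}"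
    then have "(-1::int) ^ (t - k) * int (t choose Suc k) + (-1) ^ (t - Suc k) * int (t choose Suc k) = 0"
      by (intro sign_cancel) simp
    then show "((-1) ^ (t - k) * int (Suc t choose Suc k) + (-1) ^ (t - Suc k) * int (t choose Suc k)) * ?c k
        = (-1) ^ (t - k) * int (t choose k) * ?c k"
      by (simp add: algebra_simps)
  qed
  finally have S: "Af h (Suc t) + Af h t = (\<Sum>k\<le>t. (-1) ^ (t - k) * int (t choose k) * ?c k)" .
  have "Af (Suc h) (Suc t) = (\<Sum>k\<le>t. (-1) ^ (t - k) * int (Suc t choose Suc k) * int (Suc k) * ?c k)"
    unfolding Af_def by (subst sum.atMost_Suc_shift) (simp add: algebra_simps del: binomial_Suc_Suc)
  also have "\<dots> = (\<Sum>k\<le>t. int (Suc t) * ((-1) ^ (t - k) * int (t choose k) * ?c k))"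
  proof (intro sum.cong refl)
    fix k
    have "int (Suc t choose Suc k) * int (Suc k) = int (Suc t) * int (t choose k)"
      using Suc_times_binomial[of k t] by (simp only: of_nat_mult[symmetric] mult.commute)
    then show "(-1) ^ (t - k) * int (Suc t choose Suc k) * int (Suc k) * ?c k
        = int (Suc t) * ((-1) ^ (t - k) * int (t choose k) * ?c k)"
      by (metis (no_types, lifting) mult.assoc mult.left_commute)
  qed
  also have "\<dots> = int (Suc t) * (Af h (Suc t) + Af h t)"
    by (simp add: S sum_distrib_left)
  finally show ?thesis .
qed

lemma Af_vanish: "h < t \<Longrightarrow> Af h t = 0"
proof (induction h arbitrary: t)
  case 0 then show ?case by (simp add: Af_0)
next
  case (Suc h)
  then obtain t' where t: "t = Suc t'" by (cases t) auto
  with Suc show ?case by (simp add: Af_rec)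
qed

lemma mult_choose: "int w * int (w choose t) = int t * int (w choose t) + int (Suc t) * int (w choose Suc t)"
proof (cases "t \<le> w")
  case True
  have "(w - t) * (w choose t) = Suc t * (w choose Suc t)"
    by (simp only: binomial_absorb_comp binomial_absorption)
  then have "int (w - t) * int (w choose t) = int (Suc t) * int (w choose Suc t)"
    by (metis of_nat_mult)
  then show ?thesis using True by (simp add: of_nat_diff algebra_simps)
next
  case False then show ?thesis by (simp add: binomial_eq_0)
qed

lemma power_Af: "int w ^ h = (\<Sum>t\<le>h. Af h t * int (w choose t))"
proof (induction h)
  case 0 then show ?case by (simp add: Af_0)
next
  case (Suc h)
  have "int w ^ Suc h = (\<Sum>t\<le>h. Af h t * (int w * int (w choose t)))"
    using Suc by (simp add: sum_distrib_left algebra_simps)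
  also have "\<dots> = (\<Sum>t\<le>h. int t * Af h t * int (w choose t))
      + (\<Sum>t\<le>h. int (Suc t) * Af h t * int (w choose Suc t))"
    by (simp add: mult_choose sum.distrib algebra_simps)
  also have "(\<Sum>t\<le>h. int t * Af h t * int (w choose t))
      = (\<Sum>t\<le>h. int (Suc t) * Af h (Suc t) * int (w choose Suc t))"
  proof -
    have z: "Af h (Suc h) = 0" by (rule Af_vanish) simp
    have a: "(\<Sum>t\<le>Suc h. int t * Af h t * int (w choose t))
        = (\<Sum>t\<le>h. int t * Af h t * int (w choose t))"
      by (simp add: z)
    have b: "(\<Sum>t\<le>Suc h. int t * Af h t * int (w choose t))
        = (\<Sum>t\<le>h. int (Suc t) * Af h (Suc t) * int (w choose Suc t))"
      by (subst sum.atMost_Suc_shift) simp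
    from a[symmetric] b show ?thesis by (rule trans)
  qed
  also have "(\<Sum>t\<le>h. int (Suc t) * Af h (Suc t) * int (w choose Suc t))
      + (\<Sum>t\<le>h. int (Suc t) * Af h t * int (w choose Suc t))
      = (\<Sum>t\<le>h. Af (Suc h) (Suc t) * int (w choose Suc t))"
    by (simp add: Af_rec sum.distrib[symmetric] algebra_simps)
  also have "\<dots> = (\<Sum>t\<le>Suc h. Af (Suc h) t * int (w choose t))"
    by (subst sum.atMost_Suc_shift) (simp add: Af_Suc_0)
  finally show ?case .
qed


context f2q begin

definition supp :: "'a \<Rightarrow> ('a^2^2) set" where
  "supp a = {g\<in>G. lam r (a * trace g) = -1}"

definition wt :: "'a \<Rightarrow> nat" where "wt a = card (supp a)"

lemma supp_G: "supp a \<subseteq> G" by (auto simp: supp_def)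

lemma sum_lam_wt: "(\<Sum>g\<in>G. lam r (a * trace g)) = int (card G) - 2 * int (wt a)"
proof -
  have "(\<Sum>g\<in>G. lam r (a * trace g)) = (\<Sum>g\<in>G. 1 - 2 * (if g \<in> supp a then 1 else 0))"
  proof (intro sum.cong refl)
    fix g assume "g \<in> G"
    then show "lam r (a * trace g) = 1 - 2 * (if g \<in> supp a then 1 else 0)"
      using lam_pm[of "a * trace g"] by (auto simp: supp_def)
  qed
  also have "\<dots> = int (card G) - 2 * (\<Sum>g\<in>G. (if g \<in> supp a then 1 else 0))"
    by (simp add: sum_subtractf sum_distrib_left)
  also have "(\<Sum>g\<in>G. (if g \<in> supp a then 1 else 0)) = int (wt a)"
    using supp_G[of a] by (simp add: sum.If_cases wt_def Int_absorb1)
  finally show ?thesis .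
qed

lemma wt_0: "wt 0 = 0"
  by (simp add: wt_def supp_def)

lemma prod_lam: "finite (U::('a^2^2) set) \<Longrightarrow> (\<Prod>g\<in>U. lam r (a * trace g)) = lam r (a * (\<Sum>g\<in>U. trace g))"
  by (induction U rule: finite_induct) (simp_all add: lam_add distrib_left)

lemma prod_ind:
  "finite T \<Longrightarrow> T \<subseteq> G \<Longrightarrow> (\<Prod>g\<in>T. 1 - lam r (a * trace g)) = (if T \<subseteq> supp a then 2 ^ card T else 0)"
proof (induction T rule: finite_induct)
  case empty then show ?case by simp
next
  case (insert x F)
  show ?case
  proof (cases "lam r (a * trace x) = -1")
    case True
    then show ?thesis using insert by (auto simp: supp_def)
  next
    case False
    then have "lam r (a * trace x) = 1" using lam_pm by blast
    then show ?thesis using insert False by (auto simp: supp_def)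
  qed
qed

lemma count_T:
  assumes T: "T \<subseteq> G"
  shows "2 ^ card T * int (card {a. T \<subseteq> supp a})
         = int CARD('a) * (\<Sum>U\<in>Pow T. (-1) ^ card U * (if (\<Sum>g\<in>U. trace g) = 0 then 1 else 0))"
proof -
  have fT: "finite T" by (rule finite_subset[OF T]) simp
  have "2 ^ card T * int (card {a. T \<subseteq> supp a}) = (\<Sum>a\<in>UNIV. (if T \<subseteq> supp a then 2 ^ card T else 0))"
    by (simp add: sum.If_cases)
  also have "\<dots> = (\<Sum>a\<in>UNIV. \<Prod>g\<in>T. (- lam r (a * trace g)) + 1)"
    using prod_ind[OF fT T] by simp
  also have "\<dots> = (\<Sum>a\<in>UNIV. \<Sum>U\<in>Pow T. (\<Prod>g\<in>U. - lam r (a * trace g)) * (\<Prod>g\<in>T-U. 1))"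
    by (intro sum.cong refl prod_add fT)
  also have "\<dots> = (\<Sum>a\<in>UNIV. \<Sum>U\<in>Pow T. (-1) ^ card U * lam r (a * (\<Sum>g\<in>U. trace g)))"
  proof (intro sum.cong refl)
    fix a U assume "U \<in> Pow T"
    then have "finite U" using fT by (auto intro: finite_subset)
    then show "(\<Prod>g\<in>U. - lam r (a * trace g)) * (\<Prod>g\<in>T-U. 1) = (-1) ^ card U * lam r (a * (\<Sum>g\<in>U. trace g))"
      by (simp add: prod_lam[symmetric] prod_uminus)
  qed
  also have "\<dots> = (\<Sum>U\<in>Pow T. (-1) ^ card U * (\<Sum>a\<in>UNIV. lam r (a * (\<Sum>g\<in>U. trace g))))"
    by (subst sum.swap) (simp add: sum_distrib_left)
  also have "\<dots> = (\<Sum>U\<in>Pow T. (-1) ^ card U * (if (\<Sum>g\<in>U. trace g) = 0 then int CARD('a) else 0))"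
  proof (intro sum.cong refl)
    fix U :: "('a^2^2) set"
    have "(\<Sum>a\<in>UNIV. lam r (a * (\<Sum>g\<in>U. trace g))) = (\<Sum>a\<in>UNIV. lam r ((\<Sum>g\<in>U. trace g) * a))"
      by (simp add: mult.commute)
    also have "\<dots> = (if (\<Sum>g\<in>U. trace g) = 0 then int CARD('a) else 0)" by (rule char_sum)
    finally show "(-1) ^ card U * (\<Sum>a\<in>UNIV. lam r (a * (\<Sum>g\<in>U. trace g)))
      = (-1) ^ card U * (if (\<Sum>g\<in>U. trace g) = 0 then int CARD('a) else 0)" by simp
  qed
  also have "\<dots> = int CARD('a) * (\<Sum>U\<in>Pow T. (-1) ^ card U * (if (\<Sum>g\<in>U. trace g) = 0 then 1 else 0))"
    unfolding sum_distrib_left by (intro sum.cong refl) auto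
  finally show ?thesis .
qed

abbreviation "TT t \<equiv> {T. T \<subseteq> G \<and> card T = t}"

lemma finite_TT: "finite (TT t)"
  by (rule finite_subset[of _ "Pow G"]) auto

lemma card_filter_sum: "finite A \<Longrightarrow> card {x\<in>A. P x} = (\<Sum>x\<in>A. if P x then 1 else 0)"
  by (simp add: sum.If_cases Int_def)

lemma card_filter_sum_int: "finite A \<Longrightarrow> (\<Sum>x\<in>A. if P x then 1 else 0::int) = int (card {x\<in>A. P x})"
  by (simp add: sum.If_cases Int_def)

lemma double_count:
  "(\<Sum>a\<in>UNIV. wt a choose t) = (\<Sum>T\<in>TT t. card {a. T \<subseteq> supp a})"
proof -
  have "(\<Sum>a\<in>UNIV. wt a choose t) = (\<Sum>a\<in>UNIV. \<Sum>T\<in>TT t. if T \<subseteq> supp a then 1 else 0)"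
  proof (intro sum.cong refl)
    fix a :: 'a
    have fs: "finite (supp a)" by (rule finite_subset[OF supp_G]) simp
    have "wt a choose t = card {T. T \<subseteq> supp a \<and> card T = t}"
      unfolding wt_def by (rule n_subsets[OF fs, symmetric])
    also have "{T. T \<subseteq> supp a \<and> card T = t} = {T\<in>TT t. T \<subseteq> supp a}"
      using supp_G[of a] by auto
    also have "card \<dots> = (\<Sum>T\<in>TT t. if T \<subseteq> supp a then 1 else 0)"
      by (rule card_filter_sum[OF finite_TT])
    finally show "wt a choose t = (\<Sum>T\<in>TT t. if T \<subseteq> supp a then 1 else 0)" .
  qed
  also have "\<dots> = (\<Sum>T\<in>TT t. \<Sum>a\<in>UNIV. if T \<subseteq> supp a then 1 else 0)"
    by (rule sum.swap)
  also have "\<dots> = (\<Sum>T\<in>TT t. card {a. T \<subseteq> supp a})"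
    by (intro sum.cong refl) (simp add: card_filter_sum[of UNIV, simplified])
  finally show ?thesis .
qed

lemma card_super:
  assumes U: "U \<subseteq> G"
  shows "card {T. T \<subseteq> G \<and> card T = t \<and> U \<subseteq> T}
       = (if card U \<le> t then (card G - card U) choose (t - card U) else 0)"
proof -
  have fU: "finite U" by (rule finite_subset[OF U]) simp
  show ?thesis
  proof (cases "card U \<le> t")
    case False
    have "{T. T \<subseteq> G \<and> card T = t \<and> U \<subseteq> T} = {}"
    proof (rule ccontr)
      assume "\<not> ?thesis"
      then obtain T where "T \<subseteq> G" "card T = t" "U \<subseteq> T" by auto
      then have "card U \<le> t" using card_mono[of T U] finite_subset[of T G] by auto
      with False show False by simp
    qed
    then show ?thesis using False by simp
  next
    case True
    have "bij_betw (\<lambda>T. T - U) {T. T \<subseteq> G \<and> card T = t \<and> U \<subseteq> T} {V. V \<subseteq> G - U \<and> card V = t - card U}"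
    proof (rule bij_betwI[where g="\<lambda>V. V \<union> U"])
      show "(\<lambda>T. T - U) \<in> {T. T \<subseteq> G \<and> card T = t \<and> U \<subseteq> T} \<rightarrow> {V. V \<subseteq> G - U \<and> card V = t - card U}"
      proof
        fix T assume "T \<in> {T. T \<subseteq> G \<and> card T = t \<and> U \<subseteq> T}"
        then have T: "T \<subseteq> G" "card T = t" "U \<subseteq> T" by auto
        have "finite T" by (rule finite_subset[OF T(1)]) simp
        then have "card (T - U) = t - card U" using T by (simp add: card_Diff_subset fU)
        then show "T - U \<in> {V. V \<subseteq> G - U \<and> card V = t - card U}" using T by auto
      qed
      show "(\<lambda>V. V \<union> U) \<in> {V. V \<subseteq> G - U \<and> card V = t - card U} \<rightarrow> {T. T \<subseteq> G \<and> card T = t \<and> U \<subseteq> T}"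
      proof
        fix V assume "V \<in> {V. V \<subseteq> G - U \<and> card V = t - card U}"
        then have V: "V \<subseteq> G - U" "card V = t - card U" by auto
        have fV: "finite V" by (rule finite_subset[OF V(1)]) simp
        have "card (V \<union> U) = card V + card U" using V fV fU by (intro card_Un_disjoint) auto
        then have "card (V \<union> U) = t" using V True by simp
        then show "V \<union> U \<in> {T. T \<subseteq> G \<and> card T = t \<and> U \<subseteq> T}" using V U by auto
      qed
    qed auto
    then have "card {T. T \<subseteq> G \<and> card T = t \<and> U \<subseteq> T} = card {V. V \<subseteq> G - U \<and> card V = t - card U}"
      by (rule bij_betw_same_card)
    also have "\<dots> = card (G - U) choose (t - card U)" by (rule n_subsets) simp
    also have "card (G - U) = card G - card U" using U fU by (simp add: card_Diff_subset)
    finally show ?thesis using True by simp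
  qed
qed

lemma swap_sub:
  fixes F :: "('a^2^2) set \<Rightarrow> int"
  shows "(\<Sum>T\<in>TT t. \<Sum>U\<in>Pow T. F U)
       = (\<Sum>U\<in>Pow G. F U * int (card {T. T \<subseteq> G \<and> card T = t \<and> U \<subseteq> T}))"
proof -
  have "(\<Sum>T\<in>TT t. \<Sum>U\<in>Pow T. F U) = (\<Sum>T\<in>TT t. \<Sum>U\<in>Pow G. if U \<subseteq> T then F U else 0)"
  proof (rule sum.cong[OF refl])
    fix T assume "T \<in> TT t"
    then have e: "{U\<in>Pow G. U \<subseteq> T} = Pow T" by auto
    have "(\<Sum>U\<in>Pow G. if U \<subseteq> T then F U else 0) = (\<Sum>U\<in>{U\<in>Pow G. U \<subseteq> T}. F U)"
      using sum.inter_filter[of "Pow G" F "\<lambda>U. U \<subseteq> T"] by simp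
    then show "(\<Sum>U\<in>Pow T. F U) = (\<Sum>U\<in>Pow G. if U \<subseteq> T then F U else 0)"
      by (simp only: e)
  qed
  also have "\<dots> = (\<Sum>U\<in>Pow G. \<Sum>T\<in>TT t. if U \<subseteq> T then F U else 0)"
    by (rule sum.swap)
  also have "\<dots> = (\<Sum>U\<in>Pow G. F U * int (card {T. T \<subseteq> G \<and> card T = t \<and> U \<subseteq> T}))"
  proof (intro sum.cong refl)
    fix U
    have "(\<Sum>T\<in>TT t. if U \<subseteq> T then F U else 0) = F U * (\<Sum>T\<in>TT t. if U \<subseteq> T then 1 else 0)"
      unfolding sum_distrib_left by (rule sum.cong[OF refl]) simp
    also have "(\<Sum>T\<in>TT t. if U \<subseteq> T then 1 else 0) = int (card {T\<in>TT t. U \<subseteq> T})"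
      by (rule card_filter_sum_int[OF finite_TT])
    also have "{T\<in>TT t. U \<subseteq> T} = {T. T \<subseteq> G \<and> card T = t \<and> U \<subseteq> T}" by auto
    finally show "(\<Sum>T\<in>TT t. if U \<subseteq> T then F U else 0) = F U * int (card {T. T \<subseteq> G \<and> card T = t \<and> U \<subseteq> T})" .
  qed
  finally show ?thesis .
qed

definition cc :: "nat \<Rightarrow> nat \<Rightarrow> nat" where
  "cc t i = (if i \<le> t then (card G - i) choose (t - i) else 0)"

lemma group_card:
  "(\<Sum>U\<in>Pow G. (-1) ^ card U * (if (\<Sum>g\<in>U. trace g) = 0 then 1 else 0) * int (cc t (card U)))
   = (\<Sum>i\<le>card G. (-1) ^ i * int (D i) * int (cc t i))"
proof -
  have "(\<Sum>U\<in>Pow G. (-1) ^ card U * (if (\<Sum>g\<in>U. trace g) = 0 then 1 else 0) * int (cc t (card U)))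
     = (\<Sum>i\<in>{..card G}. \<Sum>U\<in>{U\<in>Pow G. card U = i}. (-1) ^ card U * (if (\<Sum>g\<in>U. trace g) = 0 then 1 else 0) * int (cc t (card U)))"
    by (rule sum.group[symmetric]) (auto intro: card_mono)
  also have "\<dots> = (\<Sum>i\<le>card G. (-1) ^ i * int (D i) * int (cc t i))"
  proof (rule sum.cong[OF refl])
    fix i
    have "(\<Sum>U\<in>{U\<in>Pow G. card U = i}. (-1) ^ card U * (if (\<Sum>g\<in>U. trace g) = 0 then 1 else 0) * int (cc t (card U)))
       = (\<Sum>U\<in>{U\<in>Pow G. card U = i}. (-1) ^ i * int (cc t i) * (if (\<Sum>g\<in>U. trace g) = 0 then 1 else 0))"
      by (rule sum.cong[OF refl]) simp
    also have "\<dots> = (-1) ^ i * int (cc t i) * (\<Sum>U\<in>{U\<in>Pow G. card U = i}. (if (\<Sum>g\<in>U. trace g) = 0 then 1 else 0))"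
      by (simp add: sum_distrib_left)
    also have "(\<Sum>U\<in>{U\<in>Pow G. card U = i}. (if (\<Sum>g\<in>U. trace g) = 0 then 1 else 0)) = int (card {U\<in>{U\<in>Pow G. card U = i}. (\<Sum>g\<in>U. trace g) = 0})"
      by (rule card_filter_sum_int) simp
    also have "{U\<in>{U\<in>Pow G. card U = i}. (\<Sum>g\<in>U. trace g) = 0} = {U. U \<subseteq> G \<and> card U = i \<and> (\<Sum>g\<in>U. trace g) = 0}"
      by auto
    finally show "(\<Sum>U\<in>{U\<in>Pow G. card U = i}. (-1) ^ card U * (if (\<Sum>g\<in>U. trace g) = 0 then 1 else 0) * int (cc t (card U)))
       = (-1) ^ i * int (D i) * int (cc t i)" by (simp add: D_def)
  qed
  finally show ?thesis .
qed

lemma pless_t: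
  "2 ^ t * (\<Sum>a\<in>UNIV. int (wt a choose t)) = int CARD('a) * (\<Sum>i\<le>card G. (-1) ^ i * int (D i) * int (cc t i))"
proof -
  let ?F = "\<lambda>U::('a^2^2) set. (-1) ^ card U * (if (\<Sum>g\<in>U. trace g) = 0 then 1 else (0::int))"
  have "2 ^ t * (\<Sum>a\<in>UNIV. int (wt a choose t)) = 2 ^ t * int (\<Sum>a\<in>UNIV. wt a choose t)"
    by simp
  also have "\<dots> = (\<Sum>T\<in>TT t. 2 ^ card T * int (card {a. T \<subseteq> supp a}))"
    by (simp add: double_count sum_distrib_left)
  also have "\<dots> = (\<Sum>T\<in>TT t. int CARD('a) * (\<Sum>U\<in>Pow T. ?F U))"
  proof (rule sum.cong[OF refl])
    fix T assume T: "T \<in> TT t"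
    then have "T \<subseteq> G" by simp
    from count_T[OF this] T show "2 ^ card T * int (card {a. T \<subseteq> supp a}) = int CARD('a) * (\<Sum>U\<in>Pow T. ?F U)"
      by simp
  qed
  also have "\<dots> = int CARD('a) * (\<Sum>U\<in>Pow G. ?F U * int (card {T. T \<subseteq> G \<and> card T = t \<and> U \<subseteq> T}))"
    by (simp add: sum_distrib_left[symmetric] swap_sub)
  also have "(\<Sum>U\<in>Pow G. ?F U * int (card {T. T \<subseteq> G \<and> card T = t \<and> U \<subseteq> T}))
           = (\<Sum>U\<in>Pow G. ?F U * int (cc t (card U)))"
    by (rule sum.cong[OF refl]) (simp add: card_super cc_def)
  also have "\<dots> = (\<Sum>i\<le>card G. (-1) ^ i * int (D i) * int (cc t i))"
    using group_card[of t] by simp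
  finally show ?thesis .
qed

lemma pless_h:
  "(\<Sum>a\<in>UNIV. (2 * int (wt a)) ^ h)
   = int CARD('a) * (\<Sum>i\<le>card G. (-1) ^ i * int (D i) * (\<Sum>t\<le>h. Af h t * 2 ^ (h - t) * int (cc t i)))"
proof -
  have "(\<Sum>a\<in>UNIV. (2 * int (wt a)) ^ h) = (\<Sum>a\<in>UNIV. \<Sum>t\<le>h. Af h t * 2 ^ (h - t) * (2 ^ t * int (wt a choose t)))"
  proof (rule sum.cong[OF refl])
    fix a :: 'a
    have "(2 * int (wt a)) ^ h = 2 ^ h * (\<Sum>t\<le>h. Af h t * int (wt a choose t))"
      by (simp add: power_mult_distrib power_Af)
    also have "\<dots> = (\<Sum>t\<le>h. Af h t * 2 ^ (h - t) * (2 ^ t * int (wt a choose t)))"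
    proof -
      have "\<And>t. t \<le> h \<Longrightarrow> (2::int) ^ h = 2 ^ (h - t) * 2 ^ t"
        by (simp add: power_add[symmetric])
      then show ?thesis by (auto simp: sum_distrib_left intro!: sum.cong)
    qed
    finally show "(2 * int (wt a)) ^ h = (\<Sum>t\<le>h. Af h t * 2 ^ (h - t) * (2 ^ t * int (wt a choose t)))" .
  qed
  also have "\<dots> = (\<Sum>t\<le>h. Af h t * 2 ^ (h - t) * (2 ^ t * (\<Sum>a\<in>UNIV. int (wt a choose t))))"
    by (subst sum.swap) (simp add: sum_distrib_left)
  also have "\<dots> = (\<Sum>t\<le>h. Af h t * 2 ^ (h - t) * (int CARD('a) * (\<Sum>i\<le>card G. (-1) ^ i * int (D i) * int (cc t i))))"
    by (simp add: pless_t)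
  also have "\<dots> = int CARD('a) * (\<Sum>t\<le>h. \<Sum>i\<le>card G. (-1) ^ i * int (D i) * (Af h t * 2 ^ (h - t) * int (cc t i)))"
    by (simp add: sum_distrib_left algebra_simps)
  also have "\<dots> = int CARD('a) * (\<Sum>i\<le>card G. (-1) ^ i * int (D i) * (\<Sum>t\<le>h. Af h t * 2 ^ (h - t) * int (cc t i)))"
    by (subst sum.swap) (simp add: sum_distrib_left)
  finally show ?thesis .
qed

lemma sq_bij: "bij_betw (\<lambda>a::'a. a^2) (UNIV - {0}) (UNIV - {0})"
proof -
  have inj: "inj_on (\<lambda>a::'a. a^2) (UNIV - {0})"
  proof (rule inj_onI)
    fix a b :: 'a assume "a^2 = b^2"
    then have "a^2 + b^2 = 0" using eq_iff_add0[of "a^2" "b^2"] by blast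
    then have "(a + b)^2 = 0" by (simp add: sq_add)
    then have "a + b = 0" by simp
    then show "a = b" using eq_iff_add0[of a b] by blast
  qed
  moreover have "(\<lambda>a::'a. a^2) ` (UNIV - {0}) = UNIV - {0}"
    by (rule endo_inj_surj[OF _ _ inj]) auto
  ultimately show ?thesis by (simp add: bij_betw_def)
qed

lemma MK_sq: "(\<Sum>a\<in>UNIV - {0}. kloosterman r ((a::'a)^2) ^ k) = MK r TYPE('a) k"
  unfolding MK_def using sum.reindex_bij_betw[OF sq_bij, of "\<lambda>b. kloosterman r b ^ k"] by simp

lemma kl_side:
  assumes h: "h > 0"
  shows "(\<Sum>a\<in>UNIV. (2 * int (wt a)) ^ h)
       = (\<Sum>k\<le>h. int (h choose k) * (- int CARD('a)) ^ k * int (card G) ^ (h - k) * MK r TYPE('a) k)"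
proof -
  let ?N = "int (card G)" and ?q = "int CARD('a)"
  have "(\<Sum>a\<in>UNIV. (2 * int (wt a)) ^ h) = (2 * int (wt 0)) ^ h + (\<Sum>a\<in>UNIV - {0}. (2 * int (wt a)) ^ h)"
    by (simp add: sum.remove[of UNIV 0])
  also have "(2 * int (wt 0)) ^ h = 0" using h by (simp add: wt_0)
  also have "(\<Sum>a\<in>UNIV - {0}. (2 * int (wt a)) ^ h) = (\<Sum>a\<in>UNIV - {0}. (- ?q * kloosterman r ((a::'a)^2) + ?N) ^ h)"
  proof (rule sum.cong[OF refl])
    fix a :: 'a assume "a \<in> UNIV - {0}"
    then have "a \<noteq> 0" by simp
    from sum_lam_wt[of a] kl_G[OF this] have "2 * int (wt a) = - ?q * kloosterman r ((a::'a)^2) + ?N" by simp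
    then show "(2 * int (wt a)) ^ h = (- ?q * kloosterman r ((a::'a)^2) + ?N) ^ h" by simp
  qed
  also have "\<dots> = (\<Sum>a\<in>UNIV - {0}. \<Sum>k\<le>h. int (h choose k) * (- ?q * kloosterman r ((a::'a)^2)) ^ k * ?N ^ (h - k))"
    by (rule sum.cong[OF refl]) (rule binomial_ring)
  also have "\<dots> = (\<Sum>k\<le>h. int (h choose k) * (- ?q) ^ k * ?N ^ (h - k) * (\<Sum>a\<in>UNIV - {0}. kloosterman r ((a::'a)^2) ^ k))"
  proof -
    have pm: "\<And>x y :: int. \<And>j::nat. (- (x * y)) ^ j = (- x) ^ j * y ^ j"
      by (metis minus_mult_left power_mult_distrib)
    show ?thesis by (subst sum.swap) (simp add: sum_distrib_left pm algebra_simps)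
  qed
  also have "\<dots> = (\<Sum>k\<le>h. int (h choose k) * (- ?q) ^ k * ?N ^ (h - k) * MK r TYPE('a) k)"
    by (simp add: MK_sq)
  finally show ?thesis by simp
qed

end


context f2q begin

definition P :: "'a \<Rightarrow> ('a^2^2) set" where "P \<beta> = {g\<in>G. trace g = \<beta>}"

definition prof :: "('a^2^2) set \<Rightarrow> 'a \<Rightarrow> nat" where
  "prof U = (\<lambda>\<beta>. card (U \<inter> P \<beta>))"

lemma UP: "U \<subseteq> G \<Longrightarrow> U \<inter> P \<beta> = {g\<in>U. trace g = \<beta>}"
  by (auto simp: P_def)

lemma card_prof: "U \<subseteq> G \<Longrightarrow> card U = (\<Sum>\<beta>\<in>UNIV. prof U \<beta>)"
proof -
  assume U: "U \<subseteq> G"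
  have fU: "finite U" by (rule finite_subset[OF U]) simp
  have "card U = (\<Sum>g\<in>U. 1)" by simp
  also have "\<dots> = (\<Sum>\<beta>\<in>UNIV. \<Sum>g\<in>{g\<in>U. trace g = \<beta>}. 1)"
    by (rule sum.group[symmetric]) (use fU in auto)
  also have "\<dots> = (\<Sum>\<beta>\<in>UNIV. prof U \<beta>)" by (simp add: prof_def UP[OF U])
  finally show ?thesis .
qed

lemma sum_prof: "U \<subseteq> G \<Longrightarrow> (\<Sum>g\<in>U. trace g) = (\<Sum>\<beta>\<in>UNIV. of_nat (prof U \<beta>) * \<beta>)"
proof -
  assume U: "U \<subseteq> G"
  have fU: "finite U" by (rule finite_subset[OF U]) simp
  have "(\<Sum>g\<in>U. trace g) = (\<Sum>\<beta>\<in>UNIV. \<Sum>g\<in>{g\<in>U. trace g = \<beta>}. trace g)"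
    by (rule sum.group[symmetric]) (use fU in auto)
  also have "\<dots> = (\<Sum>\<beta>\<in>UNIV. \<Sum>g\<in>{g\<in>U. trace g = \<beta>}. \<beta>)"
    by (intro sum.cong refl) auto
  also have "\<dots> = (\<Sum>\<beta>\<in>UNIV. of_nat (prof U \<beta>) * \<beta>)" by (simp add: prof_def UP[OF U])
  finally show ?thesis .
qed

lemma card_P: "card (P \<beta>) = nb \<beta>" by (simp add: P_def nb_def)

lemma card_fiber_prof:
  "card {U. U \<subseteq> G \<and> prof U = \<nu>} = (\<Prod>\<beta>\<in>UNIV. nb \<beta> choose \<nu> \<beta>)"
proof -
  let ?B = "\<lambda>\<beta>. {V. V \<subseteq> P \<beta> \<and> card V = \<nu> \<beta>}"
  let ?f = "\<lambda>U. (\<lambda>\<beta>. U \<inter> P \<beta>)"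
  let ?g = "\<lambda>F. \<Union>\<beta>. F \<beta>"
  have Pdisj: "\<And>\<beta> \<gamma>. \<beta> \<noteq> \<gamma> \<Longrightarrow> P \<beta> \<inter> P \<gamma> = {}" by (auto simp: P_def)
  have "bij_betw ?f {U. U \<subseteq> G \<and> prof U = \<nu>} (PiE UNIV ?B)"
  proof (rule bij_betwI[where g="?g"])
    show "?f \<in> {U. U \<subseteq> G \<and> prof U = \<nu>} \<rightarrow> PiE UNIV ?B"
      by (auto simp: prof_def PiE_UNIV_domain)
    show "?g \<in> PiE UNIV ?B \<rightarrow> {U. U \<subseteq> G \<and> prof U = \<nu>}"
    proof
      fix F assume F: "F \<in> PiE UNIV ?B"
      then have FP: "\<And>\<beta>. F \<beta> \<subseteq> P \<beta>" and Fc: "\<And>\<beta>. card (F \<beta>) = \<nu> \<beta>" by auto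
      have sub: "?g F \<subseteq> G" using FP by (auto simp: P_def)
      have "?g F \<inter> P \<beta> = F \<beta>" for \<beta>
      proof
        show "?g F \<inter> P \<beta> \<subseteq> F \<beta>"
        proof
          fix x assume "x \<in> ?g F \<inter> P \<beta>"
          then obtain \<gamma> where "x \<in> F \<gamma>" "x \<in> P \<beta>" by auto
          then have "x \<in> P \<gamma>" using FP by auto
          then have "\<gamma> = \<beta>" using \<open>x \<in> P \<beta>\<close> Pdisj by blast
          then show "x \<in> F \<beta>" using \<open>x \<in> F \<gamma>\<close> by simp
        qed
        show "F \<beta> \<subseteq> ?g F \<inter> P \<beta>" using FP by auto
      qed
      then have "prof (?g F) = \<nu>" using Fc by (simp add: prof_def)
      then show "?g F \<in> {U. U \<subseteq> G \<and> prof U = \<nu>}" using sub by simp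
    qed
    show "?g (?f U) = U" if "U \<in> {U. U \<subseteq> G \<and> prof U = \<nu>}" for U
      using that by (auto simp: P_def)
    show "?f (?g F) = F" if F: "F \<in> PiE UNIV ?B" for F
    proof
      fix \<beta>
      have FP: "\<And>\<beta>. F \<beta> \<subseteq> P \<beta>" using F by auto
      show "?g F \<inter> P \<beta> = F \<beta>"
      proof
        show "?g F \<inter> P \<beta> \<subseteq> F \<beta>"
        proof
          fix x assume "x \<in> ?g F \<inter> P \<beta>"
          then obtain \<gamma> where "x \<in> F \<gamma>" "x \<in> P \<beta>" by auto
          then have "x \<in> P \<gamma>" using FP by auto
          then have "\<gamma> = \<beta>" using \<open>x \<in> P \<beta>\<close> Pdisj by blast
          then show "x \<in> F \<beta>" using \<open>x \<in> F \<gamma>\<close> by simp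
        qed
        show "F \<beta> \<subseteq> ?g F \<inter> P \<beta>" using FP by auto
      qed
    qed
  qed
  then have "card {U. U \<subseteq> G \<and> prof U = \<nu>} = card (PiE UNIV ?B)" by (rule bij_betw_same_card)
  also have "\<dots> = (\<Prod>\<beta>\<in>UNIV. card (?B \<beta>))" by (rule card_PiE) simp
  also have "\<dots> = (\<Prod>\<beta>\<in>UNIV. nb \<beta> choose \<nu> \<beta>)"
  proof (rule prod.cong[OF refl])
    fix \<beta>
    have "finite (P \<beta>)" by (simp add: P_def)
    then show "card (?B \<beta>) = nb \<beta> choose \<nu> \<beta>" by (simp add: n_subsets card_P)
  qed
  finally show ?thesis .
qed

definition S :: "nat \<Rightarrow> ('a \<Rightarrow> nat) set" where
  "S i = {\<nu> :: 'a \<Rightarrow> nat. (\<forall>\<beta>. \<nu> \<beta> \<le> i) \<and> (\<Sum>\<beta>\<in>UNIV. \<nu> \<beta>) = i \<and> (\<Sum>\<beta>\<in>UNIV. of_nat (\<nu> \<beta>) * \<beta>) = 0}"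

lemma finite_S: "finite (S i)"
proof -
  have "S i \<subseteq> PiE UNIV (\<lambda>_. {..i})" by (auto simp: S_def PiE_UNIV_domain)
  moreover have "finite (PiE (UNIV::'a set) (\<lambda>_. {..i}))" by (rule finite_PiE) auto
  ultimately show ?thesis by (rule finite_subset)
qed

lemma D_S: "D i = (\<Sum>\<nu>\<in>S i. \<Prod>\<beta>\<in>UNIV. nb \<beta> choose \<nu> \<beta>)"
proof -
  let ?X = "{U. U \<subseteq> G \<and> card U = i \<and> (\<Sum>g\<in>U. trace g) = 0}"
  have fX: "finite ?X" by (rule finite_subset[of _ "Pow G"]) auto
  have img: "prof ` ?X \<subseteq> S i"
  proof
    fix \<nu> assume "\<nu> \<in> prof ` ?X"
    then obtain U where U: "U \<subseteq> G" "card U = i" "(\<Sum>g\<in>U. trace g) = 0" and nu: "\<nu> = prof U" by auto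
    have fU: "finite U" by (rule finite_subset[OF U(1)]) simp
    have "\<forall>\<beta>. \<nu> \<beta> \<le> i" using U fU by (auto simp: nu prof_def intro: card_mono)
    moreover have "(\<Sum>\<beta>\<in>UNIV. \<nu> \<beta>) = i" using card_prof[OF U(1)] U nu by simp
    moreover have "(\<Sum>\<beta>\<in>UNIV. of_nat (\<nu> \<beta>) * \<beta>) = 0" using sum_prof[OF U(1)] U nu by simp
    ultimately show "\<nu> \<in> S i" by (simp add: S_def)
  qed
  have "D i = card ?X" by (simp add: D_def)
  also have "\<dots> = (\<Sum>U\<in>?X. 1)" by simp
  also have "\<dots> = (\<Sum>\<nu>\<in>S i. \<Sum>U\<in>{U\<in>?X. prof U = \<nu>}. 1)"
    by (rule sum.group[symmetric, OF fX finite_S img])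
  also have "\<dots> = (\<Sum>\<nu>\<in>S i. card {U. U \<subseteq> G \<and> prof U = \<nu>})"
  proof (rule sum.cong[OF refl])
    fix \<nu> assume nu: "\<nu> \<in> S i"
    have "{U\<in>?X. prof U = \<nu>} = {U. U \<subseteq> G \<and> prof U = \<nu>}"
    proof (intro set_eqI iffI)
      fix U assume "U \<in> {U. U \<subseteq> G \<and> prof U = \<nu>}"
      then have U: "U \<subseteq> G" "prof U = \<nu>" by auto
      have "card U = i" using card_prof[OF U(1)] U nu by (simp add: S_def)
      moreover have "(\<Sum>g\<in>U. trace g) = 0" using sum_prof[OF U(1)] U nu by (simp add: S_def)
      ultimately show "U \<in> {U\<in>?X. prof U = \<nu>}" using U by simp
    qed auto
    then show "(\<Sum>U\<in>{U\<in>?X. prof U = \<nu>}. 1) = card {U. U \<subseteq> G \<and> prof U = \<nu>}" by simp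
  qed
  also have "\<dots> = (\<Sum>\<nu>\<in>S i. \<Prod>\<beta>\<in>UNIV. nb \<beta> choose \<nu> \<beta>)"
    by (simp add: card_fiber_prof)
  finally show ?thesis .
qed

lemma prod_split:
  "(\<Prod>\<beta>\<in>UNIV. nb \<beta> choose \<nu> \<beta>) =
     ((CARD('a)^2) choose (\<nu> 0))
   * (\<Prod>\<beta>\<in>{\<beta>. \<beta> \<noteq> 0 \<and> abs_tr r (inverse \<beta>) = 0}. ((CARD('a)^2 + CARD('a)) choose (\<nu> \<beta>)))
   * (\<Prod>\<beta>\<in>{\<beta>. \<beta> \<noteq> 0 \<and> abs_tr r (inverse \<beta>) = 1}. ((CARD('a)^2 - CARD('a)) choose (\<nu> \<beta>)))"
proof -
  let ?A0 = "{\<beta>::'a. \<beta> \<noteq> 0 \<and> abs_tr r (inverse \<beta>) = 0}"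
  let ?A1 = "{\<beta>::'a. \<beta> \<noteq> 0 \<and> abs_tr r (inverse \<beta>) = 1}"
  have U: "(UNIV::'a set) = {0} \<union> (?A0 \<union> ?A1)" using tr_01 by blast
  have "(\<Prod>\<beta>\<in>UNIV. nb \<beta> choose \<nu> \<beta>) = (\<Prod>\<beta>\<in>{0} \<union> (?A0 \<union> ?A1). nb \<beta> choose \<nu> \<beta>)"
    by (simp only: U[symmetric])
  also have "\<dots> = (\<Prod>\<beta>\<in>{0}. nb \<beta> choose \<nu> \<beta>) * (\<Prod>\<beta>\<in>?A0 \<union> ?A1. nb \<beta> choose \<nu> \<beta>)"
    by (rule prod.union_disjoint) auto
  also have "(\<Prod>\<beta>\<in>?A0 \<union> ?A1. nb \<beta> choose \<nu> \<beta>) = (\<Prod>\<beta>\<in>?A0. nb \<beta> choose \<nu> \<beta>) * (\<Prod>\<beta>\<in>?A1. nb \<beta> choose \<nu> \<beta>)"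
    by (rule prod.union_disjoint) auto
  also have "(\<Prod>\<beta>\<in>?A0. nb \<beta> choose \<nu> \<beta>) = (\<Prod>\<beta>\<in>?A0. (CARD('a)^2 + CARD('a)) choose \<nu> \<beta>)"
    by (rule prod.cong[OF refl]) (simp add: nb_tr0)
  also have "(\<Prod>\<beta>\<in>?A1. nb \<beta> choose \<nu> \<beta>) = (\<Prod>\<beta>\<in>?A1. (CARD('a)^2 - CARD('a)) choose \<nu> \<beta>)"
    by (rule prod.cong[OF refl]) (simp add: nb_tr1)
  finally show ?thesis by (simp add: nb_0 mult.assoc)
qed

end


lemma fact_stirling: "fact t * stirling2 h t = real_of_int (Af h t)"
proof -
  have "fact t * stirling2 h t = (\<Sum>j=0..t. (-1) ^ (t - j) * real (t choose j) * real j ^ h)"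
    by (simp add: stirling2_def)
  also have "\<dots> = real_of_int (Af h t)"
    by (simp add: Af_def atLeast0AtMost)
  finally show ?thesis .
qed

lemma ibinom_cc:
  assumes "i \<le> t" "i \<le> N"
  shows "ibinom (int N - int i) (int N - int t) = (N - i) choose (t - i)"
proof (cases "t \<le> N")
  case True
  have "ibinom (int N - int i) (int N - int t) = (N - i) choose (N - t)"
    using assms True by (simp add: ibinom_def nat_diff_distrib)
  also have "\<dots> = (N - i) choose ((N - i) - (N - t))"
    using assms True by (intro binomial_symmetric) simp
  also have "(N - i) - (N - t) = t - i" using assms True by simp
  finally show ?thesis .
next
  case False
  then show ?thesis using assms by (simp add: ibinom_def binomial_eq_0)
qed

context f2q begin

lemma X_eq:
  assumes "i \<le> card G" "i \<le> h"
  shows "real_of_int (\<Sum>t\<le>h. Af h t * 2 ^ (h - t) * int (cc t i))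
       = (\<Sum>t=i..h. fact t * stirling2 h t * 2 ^ (h - t) * real (ibinom (int (card G) - int i) (int (card G) - int t)))"
proof -
  have "(\<Sum>t\<le>h. Af h t * 2 ^ (h - t) * int (cc t i)) = (\<Sum>t\<in>{i..h}. Af h t * 2 ^ (h - t) * int (cc t i))"
    by (rule sum.mono_neutral_right) (auto simp: cc_def)
  then have "real_of_int (\<Sum>t\<le>h. Af h t * 2 ^ (h - t) * int (cc t i))
      = (\<Sum>t\<in>{i..h}. real_of_int (Af h t) * 2 ^ (h - t) * real (cc t i))" by simp
  also have "\<dots> = (\<Sum>t=i..h. fact t * stirling2 h t * 2 ^ (h - t) * real (ibinom (int (card G) - int i) (int (card G) - int t)))"
  proof (rule sum.cong[OF refl])
    fix t assume "t \<in> {i..h}"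
    then have "i \<le> t" by simp
    then show "real_of_int (Af h t) * 2 ^ (h - t) * real (cc t i)
        = fact t * stirling2 h t * 2 ^ (h - t) * real (ibinom (int (card G) - int i) (int (card G) - int t))"
      using assms by (simp add: fact_stirling cc_def ibinom_cc)
  qed
  finally show ?thesis .
qed

lemma X_zero:
  assumes "h < i"
  shows "(\<Sum>t\<le>h. Af h t * 2 ^ (h - t) * int (cc t i)) = 0"
  using assms by (intro sum.neutral) (auto simp: cc_def)

lemma main_int:
  assumes h: "h > 0"
  shows "int CARD('a) ^ h * MK r TYPE('a) h =
     (\<Sum>k<h. (-1) ^ (h + k + 1) * int (h choose k) * int (card G) ^ (h - k) * int CARD('a) ^ k * MK r TYPE('a) k)
     + int CARD('a) * (\<Sum>i\<le>card G. (-1) ^ (h + i) * int (D i) * (\<Sum>t\<le>h. Af h t * 2 ^ (h - t) * int (cc t i)))"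
proof -
  let ?q = "int CARD('a)" and ?N = "int (card G)"
  let ?R = "\<Sum>i\<le>card G. (-1) ^ i * int (D i) * (\<Sum>t\<le>h. Af h t * 2 ^ (h - t) * int (cc t i))"
  have E: "(\<Sum>k\<le>h. int (h choose k) * (- ?q) ^ k * ?N ^ (h - k) * MK r TYPE('a) k) = ?q * ?R"
    by (rule trans[OF kl_side[OF h, symmetric] pless_h])
  have "(\<Sum>k\<le>h. int (h choose k) * (- ?q) ^ k * ?N ^ (h - k) * MK r TYPE('a) k)
     = (\<Sum>k<h. int (h choose k) * (- ?q) ^ k * ?N ^ (h - k) * MK r TYPE('a) k) + (- ?q) ^ h * MK r TYPE('a) h"
  proof -
    have "(\<Sum>k\<le>h. int (h choose k) * (- ?q) ^ k * ?N ^ (h - k) * MK r TYPE('a) k)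
       = (\<Sum>k<h. int (h choose k) * (- ?q) ^ k * ?N ^ (h - k) * MK r TYPE('a) k)
         + int (h choose h) * (- ?q) ^ h * ?N ^ (h - h) * MK r TYPE('a) h"
      by (rule sum.lessThan_Suc[of _ h, unfolded lessThan_Suc_atMost])
    then show ?thesis by simp
  qed
  with E have E2: "(- ?q) ^ h * MK r TYPE('a) h = ?q * ?R - (\<Sum>k<h. int (h choose k) * (- ?q) ^ k * ?N ^ (h - k) * MK r TYPE('a) k)"
    by linarith
  have sgn: "(-1::int) ^ h * (-1) ^ h = 1" by (simp add: power_mult_distrib[symmetric])
  have "?q ^ h * MK r TYPE('a) h = (-1) ^ h * ((- ?q) ^ h * MK r TYPE('a) h)"
  proof -
    have "(- ?q) ^ h = (-1) ^ h * ?q ^ h" by (rule power_minus)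
    then have "(-1) ^ h * ((- ?q) ^ h * MK r TYPE('a) h) = ((-1) ^ h * (-1) ^ h) * (?q ^ h * MK r TYPE('a) h)"
      by (simp only: mult.assoc)
    then show ?thesis by (simp only: sgn mult_1)
  qed
  also have "\<dots> = (-1) ^ h * (?q * ?R) - (\<Sum>k<h. (-1) ^ h * (int (h choose k) * (- ?q) ^ k * ?N ^ (h - k) * MK r TYPE('a) k))"
    by (simp only: E2 right_diff_distrib sum_distrib_left)
  also have "(\<Sum>k<h. (-1) ^ h * (int (h choose k) * (- ?q) ^ k * ?N ^ (h - k) * MK r TYPE('a) k))
      = - (\<Sum>k<h. (-1) ^ (h + k + 1) * int (h choose k) * ?N ^ (h - k) * ?q ^ k * MK r TYPE('a) k)"
  proof -
    have T: "(-1) ^ h * (int (h choose k) * (- ?q) ^ k * ?N ^ (h - k) * MK r TYPE('a) k)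
        = - ((-1) ^ (h + k + 1) * int (h choose k) * ?N ^ (h - k) * ?q ^ k * MK r TYPE('a) k)" for k
    proof -
      have p1: "(-1::int) ^ (h + k + 1) = - ((-1) ^ h * (-1) ^ k)" by (simp add: power_add)
      have p2: "(- ?q) ^ k = (-1) ^ k * ?q ^ k" by (rule power_minus)
      show ?thesis unfolding p1 p2 by algebra
    qed
    show ?thesis unfolding sum_negf[symmetric] by (rule sum.cong[OF refl]) (rule T)
  qed
  also have "(-1) ^ h * (?q * ?R) = ?q * (\<Sum>i\<le>card G. (-1) ^ (h + i) * int (D i) * (\<Sum>t\<le>h. Af h t * 2 ^ (h - t) * int (cc t i)))"
  proof -
    have T2: "(-1) ^ h * ((-1) ^ i * int (D i) * X) = (-1) ^ (h + i) * int (D i) * X" for i X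
      by (simp add: power_add)
    have "(-1) ^ h * (?q * ?R) = ?q * ((-1) ^ h * ?R)" by (rule mult.left_commute)
    also have "(-1) ^ h * ?R = (\<Sum>i\<le>card G. (-1) ^ h * ((-1) ^ i * int (D i) * (\<Sum>t\<le>h. Af h t * 2 ^ (h - t) * int (cc t i))))"
      by (rule sum_distrib_left)
    also have "\<dots> = (\<Sum>i\<le>card G. (-1) ^ (h + i) * int (D i) * (\<Sum>t\<le>h. Af h t * 2 ^ (h - t) * int (cc t i)))"
      by (rule sum.cong[OF refl]) (rule T2)
    finally show ?thesis .
  qed
  finally show ?thesis by simp
qed

end


theorem corollary2:
  fixes r :: nat and h :: nat
  assumes "r > 0" and "CARD('a::{field,finite}) = 2 ^ r" and "h > 0"
  defines "q \<equiv> CARD('a)" and "N \<equiv> card (SL2 TYPE('a))"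
  shows "N = q * (q^2 - 1)
    \<and> (\<forall>i\<le>N. Cw TYPE('a) i =
         (\<Sum>\<nu>\<in>{\<nu> :: 'a \<Rightarrow> nat. (\<forall>\<beta>. \<nu> \<beta> \<le> i) \<and> (\<Sum>\<beta>\<in>UNIV. \<nu> \<beta>) = i
                          \<and> (\<Sum>\<beta>\<in>UNIV. of_nat (\<nu> \<beta>) * \<beta>) = 0}.
            ((q^2) choose (\<nu> 0))
            * (\<Prod>\<beta>\<in>{\<beta>. \<beta> \<noteq> 0 \<and> abs_tr r (inverse \<beta>) = 0}. ((q^2 + q) choose (\<nu> \<beta>)))
            * (\<Prod>\<beta>\<in>{\<beta>. \<beta> \<noteq> 0 \<and> abs_tr r (inverse \<beta>) = 1}. ((q^2 - q) choose (\<nu> \<beta>)))))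
    \<and> real q ^ h * real_of_int (MK r TYPE('a) h) =
        (\<Sum>i=0..h-1. (-1) ^ (h + i + 1) * real (h choose i) * real N ^ (h - i) * real q ^ i
                      * real_of_int (MK r TYPE('a) i))
      + real q * (\<Sum>i=0..min N h. (-1) ^ (h + i) * real (Cw TYPE('a) i)
                      * (\<Sum>t=i..h. fact t * stirling2 h t * 2 ^ (h - t)
                                   * real (ibinom (int N - int i) (int N - int t))))"
proof -
  interpret f2q r "TYPE('a)" by unfold_locales (use assms in auto)
  have P1: "N = q * (q^2 - 1)" unfolding N_def q_def by (rule card_G)
  have P2: "\<forall>i\<le>N. Cw TYPE('a) i =
         (\<Sum>\<nu>\<in>{\<nu> :: 'a \<Rightarrow> nat. (\<forall>\<beta>. \<nu> \<beta> \<le> i) \<and> (\<Sum>\<beta>\<in>UNIV. \<nu> \<beta>) = i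
                          \<and> (\<Sum>\<beta>\<in>UNIV. of_nat (\<nu> \<beta>) * \<beta>) = 0}.
            ((q^2) choose (\<nu> 0))
            * (\<Prod>\<beta>\<in>{\<beta>. \<beta> \<noteq> 0 \<and> abs_tr r (inverse \<beta>) = 0}. ((q^2 + q) choose (\<nu> \<beta>)))
            * (\<Prod>\<beta>\<in>{\<beta>. \<beta> \<noteq> 0 \<and> abs_tr r (inverse \<beta>) = 1}. ((q^2 - q) choose (\<nu> \<beta>))))"
  proof (intro allI impI)
    fix i
    have "Cw TYPE('a) i = (\<Sum>\<nu>\<in>S i. \<Prod>\<beta>\<in>UNIV. nb \<beta> choose \<nu> \<beta>)" by (simp add: Cw_D D_S)
    also have "\<dots> = (\<Sum>\<nu>\<in>S i. ((q^2) choose (\<nu> 0))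
            * (\<Prod>\<beta>\<in>{\<beta>. \<beta> \<noteq> 0 \<and> abs_tr r (inverse \<beta>) = 0}. ((q^2 + q) choose (\<nu> \<beta>)))
            * (\<Prod>\<beta>\<in>{\<beta>. \<beta> \<noteq> 0 \<and> abs_tr r (inverse \<beta>) = 1}. ((q^2 - q) choose (\<nu> \<beta>))))"
      unfolding q_def by (rule sum.cong[OF refl]) (rule prod_split)
    finally show "Cw TYPE('a) i = (\<Sum>\<nu>\<in>{\<nu> :: 'a \<Rightarrow> nat. (\<forall>\<beta>. \<nu> \<beta> \<le> i) \<and> (\<Sum>\<beta>\<in>UNIV. \<nu> \<beta>) = i
                          \<and> (\<Sum>\<beta>\<in>UNIV. of_nat (\<nu> \<beta>) * \<beta>) = 0}.
            ((q^2) choose (\<nu> 0))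
            * (\<Prod>\<beta>\<in>{\<beta>. \<beta> \<noteq> 0 \<and> abs_tr r (inverse \<beta>) = 0}. ((q^2 + q) choose (\<nu> \<beta>)))
            * (\<Prod>\<beta>\<in>{\<beta>. \<beta> \<noteq> 0 \<and> abs_tr r (inverse \<beta>) = 1}. ((q^2 - q) choose (\<nu> \<beta>))))"
      by (simp add: S_def)
  qed
  define X where "X i = (\<Sum>t\<le>h. Af h t * 2 ^ (h - t) * int (cc t i))" for i
  have MI: "int q ^ h * MK r TYPE('a) h =
     (\<Sum>k<h. (-1) ^ (h + k + 1) * int (h choose k) * int N ^ (h - k) * int q ^ k * MK r TYPE('a) k)
     + int q * (\<Sum>i\<le>N. (-1) ^ (h + i) * int (D i) * X i)"
    unfolding q_def N_def X_def by (rule main_int[OF assms(3)])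
  have MR: "real q ^ h * real_of_int (MK r TYPE('a) h) =
     (\<Sum>k<h. (-1) ^ (h + k + 1) * real (h choose k) * real N ^ (h - k) * real q ^ k * real_of_int (MK r TYPE('a) k))
     + real q * (\<Sum>i\<le>N. (-1) ^ (h + i) * real (D i) * real_of_int (X i))"
    using arg_cong[where f=real_of_int, OF MI]
    by (simp only: of_int_add of_int_mult of_int_sum of_int_power of_int_of_nat_eq of_int_minus of_int_1)
  have S1: "(\<Sum>k<h. (-1) ^ (h + k + 1) * real (h choose k) * real N ^ (h - k) * real q ^ k * real_of_int (MK r TYPE('a) k))
      = (\<Sum>i=0..h-1. (-1) ^ (h + i + 1) * real (h choose i) * real N ^ (h - i) * real q ^ i * real_of_int (MK r TYPE('a) i))"
  proof -
    have "{..<h} = {0..h-1}" using assms(3) by auto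
    then show ?thesis by simp
  qed
  have S2: "(\<Sum>i\<le>N. (-1) ^ (h + i) * real (D i) * real_of_int (X i))
      = (\<Sum>i=0..min N h. (-1) ^ (h + i) * real (Cw TYPE('a) i)
                      * (\<Sum>t=i..h. fact t * stirling2 h t * 2 ^ (h - t)
                                   * real (ibinom (int N - int i) (int N - int t))))"
  proof -
    have "(\<Sum>i\<le>N. (-1) ^ (h + i) * real (D i) * real_of_int (X i))
        = (\<Sum>i\<in>{0..min N h}. (-1) ^ (h + i) * real (D i) * real_of_int (X i))"
    proof (rule sum.mono_neutral_right)
      show "\<forall>i\<in>{..N} - {0..min N h}. (-1) ^ (h + i) * real (D i) * real_of_int (X i) = 0"
      proof
        fix i assume "i \<in> {..N} - {0..min N h}"
        then have "h < i" by auto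
        then show "(-1) ^ (h + i) * real (D i) * real_of_int (X i) = 0" by (simp add: X_zero X_def)
      qed
    qed auto
    also have "\<dots> = (\<Sum>i=0..min N h. (-1) ^ (h + i) * real (Cw TYPE('a) i)
                      * (\<Sum>t=i..h. fact t * stirling2 h t * 2 ^ (h - t)
                                   * real (ibinom (int N - int i) (int N - int t))))"
    proof (rule sum.cong[OF refl])
      fix i assume "i \<in> {0..min N h}"
      then have "i \<le> card G" "i \<le> h" by (auto simp: N_def)
      from X_eq[OF this] show "(-1) ^ (h + i) * real (D i) * real_of_int (X i) = (-1) ^ (h + i) * real (Cw TYPE('a) i)
                      * (\<Sum>t=i..h. fact t * stirling2 h t * 2 ^ (h - t)
                                   * real (ibinom (int N - int i) (int N - int t)))"
        by (simp add: Cw_D N_def X_def)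
    qed
    finally show ?thesis .
  qed
  show ?thesis using P1 P2 MR S1 S2 by simp
qed


end
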